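(* Let $(S,\mathcal{A},\mu)$ be a complete, $\sigma$-finite measure space, $E$ a Köthe function space over $(S,\mathcal{A},\mu)$, and $X$ a locally almost square real Banach space such that the simple functions are dense in $E(X)$. Then $E(X)$ is locally almost square. In particular, if $p\in[1,\infty)$ and $X$ is locally almost square, then so is $L^p(\mu,X)$. Moreover, $L^\infty(\mu,X)$ is almost square (resp. locally almost square) whenever $X$ is almost square (resp. locally almost square).
   Context: A real Banach space $X$ is almost square (ASQ) if for all $n\in\mathbb{N}$ and $x_1,\dots,x_n\in S_X$ there is a sequence $(y_k)$ in $B_X$ with $\|y_k\|\to1$ and $\|x_i+y_k\|\to1$ for all $i=1,\dots,n$. $X$ is locally almost square (LASQ) if for every $x\in S_X$ there is a sequence $(y_k)$ in $B_X$ with $\|y_k\|\to1$ and $\|x\pm y_k\|\to1$. ($S_X$ unit sphere, $B_X$ closed unit ball.) Köthe function space over $(S,\mathcal{A},\mu)$: a Banach space $(E,\|\cdot\|_E)$ of real-valued measurable functions on $S$ (modulo a.e. equality) such that $\chi_A\in E$ whenever $\mu(A)<\infty$; every $f\in E$ is integrable over every set of finite measure; and if $g$ is measurable, $f\in E$ and $|g|\le|f|$ a.e., then $g\in E$ and $\|g\|_E\le\|f\|_E$. A function $f:S\to X$ is simple if it is constant on each of finitely many disjoint measurable sets of finite measure and zero outside their union; Bochner-measurable if it is an a.e. limit of simple functions. $E(X)$ is the space of Bochner-measurable $f:S\to X$ (modulo a.e.) with $\|f(\cdot)\|\in E$, normed by $\|f\|=\|\,\|f(\cdot)\|\,\|_E$.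 $L^p(\mu,X)$ denotes the Lebesgue–Bochner spaces. *)

theory Defs
  imports "HOL-Analysis.Analysis" "HOL-Library.Function_Algebras"
begin

text \<open>For function spaces the carrier consists of representatives and N is a seminorm
  whose kernel is the a.e.-null functions; the quotient norm of a class equals N of any
  representative, so these definitions coincide with ASQ/LASQ of the quotient space.\<close>

definition lasq_on :: "'v::{plus,minus} set \<Rightarrow> ('v \<Rightarrow> real) \<Rightarrow> bool" where
  "lasq_on V N \<longleftrightarrow>
     (\<forall>x\<in>V. N x = 1 \<longrightarrow>
        (\<exists>y::nat \<Rightarrow> 'v. (\<forall>k. y k \<in> V \<and> N (y k) \<le> 1) \<and>
            (\<lambda>k. N (y k)) \<longlonglongrightarrow> 1 \<and>
            (\<lambda>k. N (x + y k)) \<longlonglongrightarrow> 1 \<and>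
            (\<lambda>k. N (x - y k)) \<longlonglongrightarrow> 1))"

definition asq_on :: "'v::{plus,minus} set \<Rightarrow> ('v \<Rightarrow> real) \<Rightarrow> bool" where
  "asq_on V N \<longleftrightarrow>
     (\<forall>F. finite F \<and> F \<noteq> {} \<and> F \<subseteq> V \<and> (\<forall>x\<in>F. N x = 1) \<longrightarrow>
        (\<exists>y::nat \<Rightarrow> 'v. (\<forall>k. y k \<in> V \<and> N (y k) \<le> 1) \<and>
            (\<lambda>k. N (y k)) \<longlonglongrightarrow> 1 \<and>
            (\<forall>x\<in>F. (\<lambda>k. N (x + y k)) \<longlonglongrightarrow> 1)))"

abbreviation LASQ :: "'b::real_normed_vector itself \<Rightarrow> bool" where
  "LASQ (_::'b itself) \<equiv> lasq_on (UNIV::'b set) norm"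

abbreviation ASQ :: "'b::real_normed_vector itself \<Rightarrow> bool" where
  "ASQ (_::'b itself) \<equiv> asq_on (UNIV::'b set) norm"

definition simple_fun :: "'a measure \<Rightarrow> ('a \<Rightarrow> 'b::real_vector) \<Rightarrow> bool" where
  "simple_fun M f \<longleftrightarrow>
     (\<exists>(n::nat) (A::nat \<Rightarrow> 'a set) (c::nat \<Rightarrow> 'b).
        (\<forall>i<n. A i \<in> sets M \<and> emeasure M (A i) < \<infinity>) \<and>
        disjoint_family_on A {..<n} \<and>
        (\<forall>x\<in>space M. f x = (\<Sum>i<n. indicator (A i) x *\<^sub>R c i)))"

definition bochner_measurable :: "'a measure \<Rightarrow> ('a \<Rightarrow> 'b::real_normed_vector) \<Rightarrow> bool" where
  "bochner_measurable M f \<longleftrightarrow>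
     (\<exists>s::nat \<Rightarrow> 'a \<Rightarrow> 'b. (\<forall>n. simple_fun M (s n)) \<and>
        (AE x in M. (\<lambda>n. s n x) \<longlonglongrightarrow> f x))"

text \<open>E is a set of real-valued measurable functions (representatives), NE its norm;
  NE is a complete seminorm on the linear space E vanishing exactly on a.e.-zero functions,
  so that E modulo a.e. equality is a Banach space.\<close>

definition kothe_space :: "'a measure \<Rightarrow> ('a \<Rightarrow> real) set \<Rightarrow> (('a \<Rightarrow> real) \<Rightarrow> real) \<Rightarrow> bool" where
  "kothe_space M E NE \<longleftrightarrow>
     E \<subseteq> borel_measurable M \<and>
     \<comment> \<open>linear space with a seminorm\<close>
     0 \<in> E \<and>
     (\<forall>f\<in>E. \<forall>g\<in>E. f + g \<in> E \<and> NE (f + g) \<le> NE f + NE g) \<and>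
     (\<forall>f\<in>E. \<forall>c::real. (\<lambda>x. c * f x) \<in> E \<and> NE (\<lambda>x. c * f x) = \<bar>c\<bar> * NE f) \<and>
     (\<forall>f\<in>E. 0 \<le> NE f) \<and>
     \<comment> \<open>norm zero exactly on the zero class\<close>
     (\<forall>f\<in>E. NE f = 0 \<longleftrightarrow> (AE x in M. f x = 0)) \<and>
     \<comment> \<open>completeness\<close>
     (\<forall>F::nat \<Rightarrow> 'a \<Rightarrow> real. (\<forall>n. F n \<in> E) \<and>
          (\<forall>e>0. \<exists>N. \<forall>m\<ge>N. \<forall>n\<ge>N. NE (F m - F n) < e) \<longrightarrow>
          (\<exists>g\<in>E. (\<lambda>n. NE (F n - g)) \<longlonglongrightarrow> 0)) \<and>
     \<comment> \<open>characteristic functions of sets of finite measure\<close>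
     (\<forall>A\<in>sets M. emeasure M A < \<infinity> \<longrightarrow> indicator A \<in> E) \<and>
     \<comment> \<open>integrability over sets of finite measure\<close>
     (\<forall>f\<in>E. \<forall>A\<in>sets M. emeasure M A < \<infinity> \<longrightarrow> set_integrable M A f) \<and>
     \<comment> \<open>ideal (lattice) property\<close>
     (\<forall>f\<in>E. \<forall>g\<in>borel_measurable M. (AE x in M. \<bar>g x\<bar> \<le> \<bar>f x\<bar>) \<longrightarrow> g \<in> E \<and> NE g \<le> NE f)"

definition EX_space :: "'a measure \<Rightarrow> ('a \<Rightarrow> real) set \<Rightarrow> ('a \<Rightarrow> 'b::real_normed_vector) set" where
  "EX_space M E = {f. bochner_measurable M f \<and> (\<lambda>x. norm (f x)) \<in> E}"

definition EX_norm :: "(('a \<Rightarrow> real) \<Rightarrow> real) \<Rightarrow> ('a \<Rightarrow> 'b::real_normed_vector) \<Rightarrow> real" where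
  "EX_norm NE f = NE (\<lambda>x. norm (f x))"

definition simple_dense :: "'a measure \<Rightarrow> ('a \<Rightarrow> real) set \<Rightarrow> (('a \<Rightarrow> real) \<Rightarrow> real) \<Rightarrow> 'b::real_normed_vector itself \<Rightarrow> bool" where
  "simple_dense M E NE (_::'b itself) \<longleftrightarrow>
     (\<forall>f\<in>(EX_space M E :: ('a \<Rightarrow> 'b) set). \<forall>e>0.
        \<exists>s. simple_fun M s \<and> EX_norm NE (f - s) < e)"

definition Lp_space :: "'a measure \<Rightarrow> real \<Rightarrow> ('a \<Rightarrow> 'b::real_normed_vector) set" where
  "Lp_space M p = {f. bochner_measurable M f \<and> integrable M (\<lambda>x. norm (f x) powr p)}"

definition Lp_norm :: "'a measure \<Rightarrow> real \<Rightarrow> ('a \<Rightarrow> 'b::real_normed_vector) \<Rightarrow> real" where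
  "Lp_norm M p f = (\<integral>x. norm (f x) powr p \<partial>M) powr (1 / p)"

definition Linf_space :: "'a measure \<Rightarrow> ('a \<Rightarrow> 'b::real_normed_vector) set" where
  "Linf_space M = {f. bochner_measurable M f \<and> (\<exists>C. AE x in M. norm (f x) \<le> C)}"

definition Linf_norm :: "'a measure \<Rightarrow> ('a \<Rightarrow> 'b::real_normed_vector) \<Rightarrow> real" where
  "Linf_norm M f = Inf {C::real. 0 \<le> C \<and> (AE x in M. norm (f x) \<le> C)}"

end

theory Submission
  imports Defs
begin

declare simple_function_compose[simp del, rule del]

lemma simple_fun_D:
  fixes u :: "'a \<Rightarrow> 'b::real_normed_vector"
  assumes "simple_fun M u"
  shows "simple_function M u \<and> (\<exists>B\<in>sets M. emeasure M B < \<infinity> \<and> (\<forall>t\<in>space M - B. u t = 0))"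
proof -
  obtain n :: nat and A c where "(\<forall>i<n. A i \<in> sets M \<and> emeasure M (A i) < \<infinity>) \<and>
        disjoint_family_on A {..<n} \<and>
        (\<forall>x\<in>space M. u x = (\<Sum>i<n. indicator (A i) x *\<^sub>R c i))"
    using assms unfolding simple_fun_def by blast
  then have A: "\<forall>i<n. A i \<in> sets M \<and> emeasure M (A i) < \<infinity>"
    and eq: "\<forall>x\<in>space M. u x = (\<Sum>i<n. indicator (A i) x *\<^sub>R c i)" by auto
  have "simple_function M (\<lambda>x. \<Sum>i<n. indicator (A i) x *\<^sub>R c i)"
  proof (rule simple_function_sum)
    fix i assume "i \<in> {..<n}"
    then have "A i \<in> sets M" using A by auto
    then show "simple_function M (\<lambda>x. indicator (A i) x *\<^sub>R c i)"
      by (rule simple_function_compose2[where h="(*\<^sub>R)", OF simple_function_indicator simple_function_const])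
  qed
  moreover have "simple_function M u \<longleftrightarrow> simple_function M (\<lambda>x. \<Sum>i<n. indicator (A i) x *\<^sub>R c i)"
    using eq by (intro simple_function_cong) blast
  ultimately have sf: "simple_function M u" by blast
  let ?B = "\<Union>i<n. A i"
  have B: "?B \<in> sets M" using A by (intro sets.finite_UN) auto
  have "emeasure M ?B \<le> (\<Sum>i<n. emeasure M (A i))"
    using A by (intro emeasure_subadditive_finite) auto
  also have "\<dots> < \<infinity>" using A by (simp add: ennreal_sum_less_top)
  finally have "emeasure M ?B < \<infinity>" .
  moreover have "\<forall>t\<in>space M - ?B. u t = 0"
    using eq by (auto simp: indicator_def)
  ultimately show ?thesis using sf B by blast
qed

lemma simple_fun_I:
  fixes u :: "'a \<Rightarrow> 'b::real_normed_vector"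
  assumes sf: "simple_function M u" and B: "B \<in> sets M" "emeasure M B < \<infinity>"
    and supp: "\<forall>t\<in>space M - B. u t = 0"
  shows "simple_fun M u"
proof -
  let ?V = "u ` space M - {0}"
  have fin: "finite ?V" using sf simple_functionD(1) by blast
  obtain c where c: "bij_betw c {0..<card ?V} ?V"
    using ex_bij_betw_nat_finite[OF fin] by blast
  define n where "n = card ?V"
  define A where "A i = u -` {c i} \<inter> space M" for i
  have cV: "c i \<in> ?V" if "i < n" for i using c that unfolding n_def bij_betw_def by auto
  have Ai: "A i \<in> sets M \<and> emeasure M (A i) < \<infinity>" if "i < n" for i
  proof
    show "A i \<in> sets M" unfolding A_def using cV[OF that] sf simple_functionD(2) by blast
    have ci: "c i \<noteq> 0" using cV[OF that] by blast
    have "A i \<subseteq> B"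
    proof
      fix x assume "x \<in> A i"
      then have x: "x \<in> space M" "u x = c i" by (auto simp: A_def)
      show "x \<in> B"
      proof (rule ccontr)
        assume "x \<notin> B"
        then have "u x = 0" using supp x by blast
        then show False using ci x by simp
      qed
    qed
    then have "emeasure M (A i) \<le> emeasure M B" using B by (intro emeasure_mono) auto
    then show "emeasure M (A i) < \<infinity>" using B by auto
  qed
  have inj: "inj_on c {..<n}" using c unfolding n_def bij_betw_def by (simp add: atLeast0LessThan)
  have disj: "disjoint_family_on A {..<n}"
    unfolding disjoint_family_on_def A_def using inj by (auto simp: inj_on_def)
  have rep: "u x = (\<Sum>i<n. indicator (A i) x *\<^sub>R c i)" if x: "x \<in> space M" for x
  proof (cases "u x = 0")
    case True
    then have "\<forall>i<n. x \<notin> A i" using cV unfolding A_def by auto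
    then show ?thesis using True by simp
  next
    case False
    then have "u x \<in> ?V" using x by auto
    moreover have "c ` {..<n} = ?V" using c unfolding n_def bij_betw_def by (simp add: atLeast0LessThan)
    ultimately have "u x \<in> c ` {..<n}" by simp
    then obtain i0 where i0: "i0 < n" "c i0 = u x" by (metis imageE lessThan_iff)
    have "(\<Sum>i<n. indicator (A i) x *\<^sub>R c i) = (\<Sum>i<n. if i = i0 then c i0 else 0)"
    proof (rule sum.cong)
      fix i assume i: "i \<in> {..<n}"
      show "indicator (A i) x *\<^sub>R c i = (if i = i0 then c i0 else 0)"
      proof (cases "i = i0")
        case True then show ?thesis using i0 x by (simp add: A_def indicator_def)
      next
        case F: False
        then have "c i \<noteq> c i0" using inj i i0 by (auto simp: inj_on_def)
        then show ?thesis using F i0 by (simp add: A_def indicator_def)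
      qed
    qed simp
    also have "\<dots> = c i0" using i0 by simp
    finally show ?thesis using i0 by simp
  qed
  have "(\<forall>i<n. A i \<in> sets M \<and> emeasure M (A i) < \<infinity>) \<and>
        disjoint_family_on A {..<n} \<and>
        (\<forall>x\<in>space M. u x = (\<Sum>i<n. indicator (A i) x *\<^sub>R c i))"
    using Ai disj rep by auto
  then show ?thesis unfolding simple_fun_def by blast
qed


lemma bochner_comb:
  fixes f :: "'a \<Rightarrow> 'b::real_normed_vector" and g :: "'a \<Rightarrow> 'c::real_normed_vector"
    and \<phi> :: "'b \<Rightarrow> 'c \<Rightarrow> 'd::real_normed_vector"
  assumes bf: "bochner_measurable M f" and bg: "bochner_measurable M g" and z: "\<phi> 0 0 = 0"
    and cont: "\<And>X Y a b. X \<longlonglongrightarrow> a \<Longrightarrow> Y \<longlonglongrightarrow> b \<Longrightarrow> (\<lambda>n. \<phi> (X n) (Y n)) \<longlonglongrightarrow> \<phi> a b"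
  shows "bochner_measurable M (\<lambda>t. \<phi> (f t) (g t))"
proof -
  obtain s where s: "\<forall>n. simple_fun M (s n)" and aes: "AE x in M. (\<lambda>n. s n x) \<longlonglongrightarrow> f x"
    using bf unfolding bochner_measurable_def by blast
  obtain r where r: "\<forall>n. simple_fun M (r n)" and aer: "AE x in M. (\<lambda>n. r n x) \<longlonglongrightarrow> g x"
    using bg unfolding bochner_measurable_def by blast
  have q: "simple_fun M (\<lambda>t. \<phi> (s n t) (r n t))" for n
  proof -
    obtain B1 where sf1: "simple_function M (s n)" and B1: "B1 \<in> sets M" "emeasure M B1 < \<infinity>"
      "\<forall>t\<in>space M - B1. s n t = 0"
      using simple_fun_D[of M "s n"] s by blast
    obtain B2 where sf2: "simple_function M (r n)" and B2: "B2 \<in> sets M" "emeasure M B2 < \<infinity>"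
      "\<forall>t\<in>space M - B2. r n t = 0"
      using simple_fun_D[of M "r n"] r by blast
    have sf: "simple_function M (\<lambda>t. \<phi> (s n t) (r n t))"
      by (rule simple_function_compose2[OF sf1 sf2])
    have "emeasure M (B1 \<union> B2) \<le> emeasure M B1 + emeasure M B2"
      using B1 B2 by (intro emeasure_subadditive) auto
    also have "\<dots> < \<infinity>" using B1 B2 by simp
    finally have "emeasure M (B1 \<union> B2) < \<infinity>" .
    moreover have "\<forall>t\<in>space M - (B1 \<union> B2). \<phi> (s n t) (r n t) = 0"
      using B1 B2 z by auto
    moreover have "B1 \<union> B2 \<in> sets M" using B1 B2 by auto
    ultimately show ?thesis using simple_fun_I[OF sf] by blast
  qed
  have "AE x in M. (\<lambda>n. \<phi> (s n x) (r n x)) \<longlonglongrightarrow> \<phi> (f x) (g x)"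
    using aes aer by eventually_elim (rule cont)
  then show ?thesis unfolding bochner_measurable_def using q
    by (intro exI[of _ "\<lambda>n t. \<phi> (s n t) (r n t)"]) auto
qed

lemma bochner_add:
  fixes f g :: "'a \<Rightarrow> 'b::real_normed_vector"
  shows "bochner_measurable M f \<Longrightarrow> bochner_measurable M g \<Longrightarrow> bochner_measurable M (\<lambda>t. f t + g t)"
  by (rule bochner_comb[where \<phi>="(+)"]) (auto intro: tendsto_add)

lemma bochner_diff:
  fixes f g :: "'a \<Rightarrow> 'b::real_normed_vector"
  shows "bochner_measurable M f \<Longrightarrow> bochner_measurable M g \<Longrightarrow> bochner_measurable M (\<lambda>t. f t - g t)"
  by (rule bochner_comb[where \<phi>="(-)"]) (auto intro: tendsto_diff)

lemma bochner_borel: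
  fixes f :: "'a \<Rightarrow> 'b::real_normed_vector"
  assumes cm: "complete_measure M" and b: "bochner_measurable M f"
  shows "f \<in> borel_measurable M"
proof -
  obtain s where s: "\<forall>n. simple_fun M (s n)" and ae: "AE x in M. (\<lambda>n. s n x) \<longlonglongrightarrow> f x"
    using b unfolding bochner_measurable_def by blast
  have "\<exists>N\<in>null_sets M. {x\<in>space M. \<not> (\<lambda>n. s n x) \<longlonglongrightarrow> f x} \<subseteq> N"
    using ae by (simp add: eventually_ae_filter)
  then obtain N where N: "{x\<in>space M. \<not> (\<lambda>n. s n x) \<longlonglongrightarrow> f x} \<subseteq> N" "N \<in> null_sets M"
    by blast
  define f' where "f' t = (if t \<in> N then 0 else f t)" for t
  have meas: "f' \<in> borel_measurable M"
  proof (rule borel_measurable_LIMSEQ_metric[where f="\<lambda>n t. if t \<in> N then 0 else s n t"])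
    fix n
    have "s n \<in> borel_measurable M"
      using simple_fun_D[of M "s n"] s borel_measurable_simple_function by blast
    moreover have "N \<inter> space M \<in> sets M" using N(2) by auto
    ultimately show "(\<lambda>t. if t \<in> N then 0 else s n t) \<in> borel_measurable M"
      by (intro measurable_If_set measurable_const) auto
  next
    fix x assume "x \<in> space M"
    then show "(\<lambda>i. if x \<in> N then 0 else s i x) \<longlonglongrightarrow> f' x"
      using N(1) by (cases "x \<in> N") (auto simp: f'_def)
  qed
  have aeq: "AE x in M. f x = f' x"
    by (rule AE_I'[OF N(2)]) (auto simp: f'_def)
  show ?thesis
  proof (rule borel_measurableI)
    fix S :: "'b set" assume "open S"
    then have A: "f' -` S \<inter> space M \<in> sets M" using meas by (intro measurable_sets[OF meas]) auto
    show "f -` S \<inter> space M \<in> sets M"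
      by (rule complete_measure.in_sets_AE[OF cm _ A]) (use aeq in \<open>auto elim!: eventually_mono\<close>)
  qed
qed

lemma bochner_one:
  assumes "sigma_finite_measure M"
  shows "bochner_measurable M (\<lambda>t. 1::real)"
proof -
  obtain A :: "nat \<Rightarrow> 'a set" where A: "range A \<subseteq> sets M" "(\<Union>i. A i) = space M"
    "\<And>i. emeasure M (A i) \<noteq> \<infinity>" "incseq A"
    using sigma_finite_measure.sigma_finite_incseq[OF assms] by metis
  have sf: "simple_fun M (indicator (A n) :: 'a \<Rightarrow> real)" for n
  proof (rule simple_fun_I)
    show "A n \<in> sets M" using A(1) by auto
    then show "simple_function M (indicator (A n) :: 'a \<Rightarrow> real)" by (rule simple_function_indicator)
    show "emeasure M (A n) < \<infinity>" using A(3)[of n] by (simp add: less_top)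
    show "\<forall>t\<in>space M - A n. (indicator (A n) t :: real) = 0" by auto
  qed
  have "(\<lambda>n. indicator (A n) t :: real) \<longlonglongrightarrow> 1" if t: "t \<in> space M" for t
  proof -
    obtain i where "t \<in> A i" using t A(2) by blast
    then have "\<forall>n\<ge>i. (indicator (A n) t :: real) = 1" using A(4) by (auto simp: incseq_def indicator_def subset_iff)
    then have "eventually (\<lambda>n. (indicator (A n) t :: real) = 1) sequentially"
      by (auto simp: eventually_sequentially)
    then show ?thesis by (rule tendsto_eventually)
  qed
  then have "AE t in M. (\<lambda>n. indicator (A n) t :: real) \<longlonglongrightarrow> 1" by (rule AE_I2)
  then show ?thesis unfolding bochner_measurable_def using sf by (intro exI[of _ "\<lambda>n. indicator (A n)"]) auto
qed


lemma simple_param_meas: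
  fixes G :: "'a \<Rightarrow> 'c \<Rightarrow> real"
  assumes s: "simple_function M s" and G: "\<And>v. (\<lambda>t. G t v) \<in> borel_measurable M"
  shows "(\<lambda>t. G t (s t)) \<in> borel_measurable M"
proof -
  have eq: "G t (s t) = (\<Sum>v\<in>s ` space M. indicator (s -` {v} \<inter> space M) t * G t v)"
    if t: "t \<in> space M" for t
  proof -
    have "(\<Sum>v\<in>s ` space M. indicator (s -` {v} \<inter> space M) t * G t v)
        = (\<Sum>v\<in>s ` space M. if v = s t then G t v else 0)"
      using t by (intro sum.cong) (auto simp: indicator_def)
    also have "\<dots> = G t (s t)" using t simple_functionD(1)[OF s] by simp
    finally show ?thesis by simp
  qed
  have "(\<lambda>t. \<Sum>v\<in>s ` space M. indicator (s -` {v} \<inter> space M) t * G t v) \<in> borel_measurable M"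
  proof (rule borel_measurable_sum)
    fix v assume "v \<in> s ` space M"
    then have "s -` {v} \<inter> space M \<in> sets M" using simple_functionD(2)[OF s] by blast
    then show "(\<lambda>t. indicator (s -` {v} \<inter> space M) t * G t v) \<in> borel_measurable M"
      by (intro borel_measurable_times borel_measurable_indicator G)
  qed
  then show ?thesis using eq measurable_cong[of M "\<lambda>t. G t (s t)"] by (metis (no_types, lifting))
qed

lemma le0_set_meas:
  fixes h :: "'a \<Rightarrow> real"
  assumes "h \<in> borel_measurable M"
  shows "{t\<in>space M. h t \<le> 0} \<in> sets M"
proof -
  have "{t\<in>space M. h t \<le> 0} = h -` {..0} \<inter> space M" by auto
  also have "\<dots> \<in> sets M" by (rule measurable_sets[OF assms]) auto
  finally show ?thesis .
qed

lemma bochner_select: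
  fixes Q :: "nat \<Rightarrow> 'a \<Rightarrow> 'c" and \<rho> :: "'a \<Rightarrow> real" and W :: "'c \<Rightarrow> 'b::real_normed_vector"
  assumes Q: "\<And>n. simple_function M (Q n)"
    and P: "\<And>n. {t\<in>space M. P n t} \<in> sets M"
    and \<rho>: "bochner_measurable M \<rho>"
  shows "bochner_measurable M (\<lambda>t. if \<exists>n. P n t then \<rho> t *\<^sub>R W (Q (LEAST n. P n t) t) else 0)"
proof -
  obtain R where R: "\<forall>n. simple_fun M (R n)" and ae: "AE x in M. (\<lambda>n. R n x) \<longlonglongrightarrow> \<rho> x"
    using \<rho> unfolding bochner_measurable_def by blast
  define C where "C n = {t\<in>space M. P n t} - (\<Union>m<n. {t\<in>space M. P m t})" for n
  have C: "C n \<in> sets M" for n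
    unfolding C_def using P by (intro sets.Diff sets.finite_UN) auto
  define H where "H N t = (\<Sum>n\<in>{..N}. indicator (C n) t *\<^sub>R (R N t *\<^sub>R W (Q n t)))" for N t
  have H: "simple_fun M (H N)" for N
  proof -
    obtain B where sf1: "simple_function M (R N)" and B: "B \<in> sets M" "emeasure M B < \<infinity>"
      "\<forall>t\<in>space M - B. R N t = 0"
      using simple_fun_D[of M "R N"] R by blast
    have sf: "simple_function M (H N)" unfolding H_def
    proof (rule simple_function_sum)
      fix n
      have "simple_function M (\<lambda>t. R N t *\<^sub>R W (Q n t))"
        by (rule simple_function_compose2[OF sf1 Q])
      then show "simple_function M (\<lambda>t. indicator (C n) t *\<^sub>R (R N t *\<^sub>R W (Q n t)))"
        by (rule simple_function_compose2[OF simple_function_indicator[OF C]])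
    qed
    have "\<forall>t\<in>space M - B. H N t = 0" using B(3) unfolding H_def by simp
    then show ?thesis using simple_fun_I[OF sf B(1,2)] by blast
  qed
  have lim: "(\<lambda>N. H N t) \<longlonglongrightarrow> (if \<exists>n. P n t then \<rho> t *\<^sub>R W (Q (LEAST n. P n t) t) else 0)"
    if t: "t \<in> space M" and conv: "(\<lambda>n. R n t) \<longlonglongrightarrow> \<rho> t" for t
  proof (cases "\<exists>n. P n t")
    case False
    then have "\<forall>n. t \<notin> C n" unfolding C_def by auto
    then have "\<forall>N. H N t = 0" unfolding H_def by simp
    then show ?thesis using False by simp
  next
    case True
    define n0 where "n0 = (LEAST n. P n t)"
    have Cn: "t \<in> C n \<longleftrightarrow> n = n0" for n
    proof
      assume "t \<in> C n"
      then have "P n t" "\<forall>m<n. \<not> P m t" unfolding C_def by auto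
      then show "n = n0" unfolding n0_def by (metis Least_equality not_less)
    next
      assume "n = n0"
      moreover have "P n0 t" unfolding n0_def using True by (rule LeastI_ex)
      moreover have "\<forall>m<n0. \<not> P m t" unfolding n0_def using not_less_Least by blast
      ultimately show "t \<in> C n" unfolding C_def using t by auto
    qed
    have ev: "eventually (\<lambda>N. R N t *\<^sub>R W (Q n0 t) = H N t) sequentially"
      unfolding eventually_sequentially
    proof (intro exI allI impI)
      fix N assume "n0 \<le> N"
      have "H N t = (\<Sum>n\<in>{..N}. if n = n0 then R N t *\<^sub>R W (Q n0 t) else 0)"
        unfolding H_def by (intro sum.cong) (auto simp: indicator_def Cn)
      also have "\<dots> = R N t *\<^sub>R W (Q n0 t)" using \<open>n0 \<le> N\<close> by simp
      finally show "R N t *\<^sub>R W (Q n0 t) = H N t" by simp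
    qed
    have "(\<lambda>N. R N t *\<^sub>R W (Q n0 t)) \<longlonglongrightarrow> \<rho> t *\<^sub>R W (Q n0 t)"
      by (intro tendsto_scaleR conv tendsto_const)
    then have "(\<lambda>N. H N t) \<longlonglongrightarrow> \<rho> t *\<^sub>R W (Q n0 t)" using tendsto_cong[OF ev] by blast
    then show ?thesis using True n0_def by simp
  qed
  have "AE t in M. (\<lambda>N. H N t) \<longlonglongrightarrow> (if \<exists>n. P n t then \<rho> t *\<^sub>R W (Q (LEAST n. P n t) t) else 0)"
    using ae AE_space by eventually_elim (blast intro: lim)
  then show ?thesis unfolding bochner_measurable_def using H
    by (intro exI[of _ H]) auto
qed


lemma norm_sgn_eq: "norm x *\<^sub>R sgn x = (x::'b::real_normed_vector)"
  by (cases "x = 0") (simp_all add: sgn_div_norm)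

lemma sgn_diff_bound:
  fixes x u :: "'b::real_normed_vector"
  assumes x: "x \<noteq> 0" and u: "u \<noteq> 0"
  shows "norm (sgn x - sgn u) \<le> 2 * norm (x - u) / norm x"
proof -
  define a where "a = norm x"
  define b where "b = norm u"
  have a: "a > 0" and b: "b > 0" using x u by (auto simp: a_def b_def)
  have eq: "sgn x - sgn u = (1/a) *\<^sub>R (x - u) + (1/a - 1/b) *\<^sub>R u"
    by (simp add: sgn_div_norm a_def b_def divide_inverse scaleR_diff_right scaleR_diff_left)
  have "norm (sgn x - sgn u) \<le> norm ((1/a) *\<^sub>R (x - u)) + norm ((1/a - 1/b) *\<^sub>R u)"
    unfolding eq by (rule norm_triangle_ineq)
  also have "norm ((1/a) *\<^sub>R (x - u)) = norm (x - u) / a" using a by simp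
  also have "norm ((1/a - 1/b) *\<^sub>R u) = \<bar>1/a - 1/b\<bar> * b" by (simp add: b_def)
  also have "\<bar>1/a - 1/b\<bar> * b = \<bar>b - a\<bar> / a"
  proof -
    have "\<bar>1/a - 1/b\<bar> * b = \<bar>(1/a - 1/b) * b\<bar>" using b by (simp add: abs_mult)
    also have "(1/a - 1/b) * b = (b - a) / a" using a b by (simp add: left_diff_distrib diff_divide_distrib)
    also have "\<bar>(b - a) / a\<bar> = \<bar>b - a\<bar> / a" using a by simp
    finally show ?thesis .
  qed
  also have "\<bar>b - a\<bar> \<le> norm (x - u)" unfolding a_def b_def
    by (metis abs_minus_commute norm_triangle_ineq3)
  then have "\<bar>b - a\<bar> / a \<le> norm (x - u) / a" using a by (simp add: divide_right_mono)
  finally show ?thesis unfolding a_def by simp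
qed

lemma lasq_choice:
  assumes L: "LASQ TYPE('b::real_normed_vector)" and eta: "\<eta> > 0"
  shows "\<exists>Y::'b \<Rightarrow> 'b. \<forall>e. norm e = 1 \<longrightarrow> norm (Y e) \<le> 1 \<and> 1 - \<eta> \<le> norm (Y e) \<and>
            norm (e + Y e) \<le> 1 + \<eta> \<and> norm (e - Y e) \<le> 1 + \<eta>"
proof -
  have "\<exists>y. norm e = 1 \<longrightarrow> norm y \<le> 1 \<and> 1 - \<eta> \<le> norm y \<and> norm (e + y) \<le> 1 + \<eta> \<and> norm (e - y) \<le> 1 + \<eta>"
    for e :: 'b
  proof (cases "norm e = 1")
    case True
    have ex: "\<exists>y::nat \<Rightarrow> 'b. (\<forall>k. y k \<in> UNIV \<and> norm (y k) \<le> 1) \<and> (\<lambda>k. norm (y k)) \<longlonglongrightarrow> 1 \<and>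
       (\<lambda>k. norm (e + y k)) \<longlonglongrightarrow> 1 \<and> (\<lambda>k. norm (e - y k)) \<longlonglongrightarrow> 1"
      using L[unfolded lasq_on_def, rule_format, OF UNIV_I True] .
    then obtain y :: "nat \<Rightarrow> 'b" where y: "\<forall>k. norm (y k) \<le> 1"
      and l1: "(\<lambda>k. norm (y k)) \<longlonglongrightarrow> 1" and l2: "(\<lambda>k. norm (e + y k)) \<longlonglongrightarrow> 1"
      and l3: "(\<lambda>k. norm (e - y k)) \<longlonglongrightarrow> 1"
      by blast
    have "eventually (\<lambda>k. dist (norm (y k)) 1 < \<eta> \<and> dist (norm (e + y k)) 1 < \<eta> \<and> dist (norm (e - y k)) 1 < \<eta>) sequentially"
      by (intro eventually_conj tendstoD[OF l1 eta] tendstoD[OF l2 eta] tendstoD[OF l3 eta])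
    then obtain N where N: "\<forall>k\<ge>N. dist (norm (y k)) 1 < \<eta> \<and> dist (norm (e + y k)) 1 < \<eta> \<and> dist (norm (e - y k)) 1 < \<eta>"
      unfolding eventually_sequentially by blast
    have d: "\<And>a::real. dist a 1 < \<eta> \<Longrightarrow> 1 - \<eta> \<le> a \<and> a \<le> 1 + \<eta>"
      by (auto simp: dist_real_def)
    have "norm (y N) \<le> 1 \<and> 1 - \<eta> \<le> norm (y N) \<and> norm (e + y N) \<le> 1 + \<eta> \<and> norm (e - y N) \<le> 1 + \<eta>"
      using N[rule_format, OF order_refl] y d by blast
    then show ?thesis by blast
  qed auto
  then have "\<forall>e::'b. \<exists>y. norm e = 1 \<longrightarrow> norm y \<le> 1 \<and> 1 - \<eta> \<le> norm y \<and> norm (e + y) \<le> 1 + \<eta> \<and> norm (e - y) \<le> 1 + \<eta>"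
    by blast
  from choice[OF this] show ?thesis by blast
qed

lemma lasq_point:
  fixes x u Y :: "'b::real_normed_vector"
  assumes x: "x \<noteq> 0" and xu: "norm (x - u) \<le> \<delta> * norm x" and d: "\<delta> < 1"
    and Y1: "norm Y \<le> 1" and Y2: "1 - \<eta> \<le> norm Y"
    and Y3: "norm (sgn u + Y) \<le> 1 + \<eta>" and Y4: "norm (sgn u - Y) \<le> 1 + \<eta>"
  shows "norm (norm x *\<^sub>R Y) \<le> norm x \<and> (1 - \<eta>) * norm x \<le> norm (norm x *\<^sub>R Y) \<and>
         norm (x + norm x *\<^sub>R Y) \<le> (1 + \<eta> + 2 * \<delta>) * norm x \<and>
         norm (x - norm x *\<^sub>R Y) \<le> (1 + \<eta> + 2 * \<delta>) * norm x"
proof -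
  have nx: "norm x > 0" using x by simp
  have u: "u \<noteq> 0"
  proof
    assume "u = 0"
    then have "norm x \<le> \<delta> * norm x" using xu by simp
    then show False using nx d by (simp add: mult_le_cancel_right1)
  qed
  have sd: "norm (sgn x - sgn u) \<le> 2 * \<delta>"
  proof -
    have "norm (sgn x - sgn u) \<le> 2 * norm (x - u) / norm x" by (rule sgn_diff_bound[OF x u])
    also have "\<dots> \<le> 2 * (\<delta> * norm x) / norm x" using xu nx by (intro divide_right_mono) auto
    also have "\<dots> = 2 * \<delta>" using nx by simp
    finally show ?thesis .
  qed
  have xs: "x = norm x *\<^sub>R sgn x" by (simp add: norm_sgn_eq)
  have p: "x + norm x *\<^sub>R Y = norm x *\<^sub>R (sgn x + Y)"
    by (subst (1) xs) (simp add: scaleR_add_right)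
  have m: "x - norm x *\<^sub>R Y = norm x *\<^sub>R (sgn x - Y)"
    by (subst (1) xs) (simp add: scaleR_diff_right)
  have "norm (sgn x + Y) \<le> norm (sgn u + Y) + norm (sgn x - sgn u)"
    using norm_triangle_ineq[of "sgn u + Y" "sgn x - sgn u"] by (simp add: algebra_simps)
  then have a1: "norm (sgn x + Y) \<le> 1 + \<eta> + 2 * \<delta>" using Y3 sd by linarith
  have "norm (sgn x - Y) \<le> norm (sgn u - Y) + norm (sgn x - sgn u)"
    using norm_triangle_ineq[of "sgn u - Y" "sgn x - sgn u"] by (simp add: algebra_simps)
  then have a2: "norm (sgn x - Y) \<le> 1 + \<eta> + 2 * \<delta>" using Y4 sd by linarith
  have "norm (x + norm x *\<^sub>R Y) \<le> (1 + \<eta> + 2 * \<delta>) * norm x"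
    unfolding p using a1 nx by (simp add: mult.commute mult_right_mono)
  moreover have "norm (x - norm x *\<^sub>R Y) \<le> (1 + \<eta> + 2 * \<delta>) * norm x"
    unfolding m using a2 nx by (simp add: mult.commute mult_right_mono)
  moreover have "norm (norm x *\<^sub>R Y) \<le> norm x" using Y1 nx by (simp add: mult_le_cancel_left1)
  moreover have "(1 - \<eta>) * norm x \<le> norm (norm x *\<^sub>R Y)" using Y2 nx by (simp add: mult.commute mult_left_mono)
  ultimately show ?thesis by blast
qed

lemma asq_choice:
  assumes A: "ASQ TYPE('b::real_normed_vector)" and eta: "\<eta> > 0"
    and G: "finite G" "G \<noteq> {}" "\<forall>e\<in>G. norm e = (1::real)" and GT: "G \<subseteq> (UNIV :: 'b set)"
  shows "\<exists>y::'b. norm y \<le> 1 \<and> 1 - \<eta> \<le> norm y \<and> (\<forall>e\<in>G. 1 - \<eta> \<le> norm (e + y) \<and> norm (e + y) \<le> 1 + \<eta>)"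
proof -
  have ex: "\<exists>y::nat \<Rightarrow> 'b. (\<forall>k. y k \<in> UNIV \<and> norm (y k) \<le> 1) \<and> (\<lambda>k. norm (y k)) \<longlonglongrightarrow> 1 \<and>
      (\<forall>x\<in>G. (\<lambda>k. norm (x + y k)) \<longlonglongrightarrow> 1)"
    apply (rule A[unfolded asq_on_def, rule_format])
    using G by auto
  then obtain y :: "nat \<Rightarrow> 'b" where y: "\<forall>k. norm (y k) \<le> 1"
    and l1: "(\<lambda>k. norm (y k)) \<longlonglongrightarrow> 1" and l2: "\<forall>e\<in>G. (\<lambda>k. norm (e + y k)) \<longlonglongrightarrow> 1"
    by blast
  have "\<forall>e\<in>G. eventually (\<lambda>k. dist (norm (e + y k)) 1 < \<eta>) sequentially"
    using l2 eta tendstoD by blast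
  then have "eventually (\<lambda>k. \<forall>e\<in>G. dist (norm (e + y k)) 1 < \<eta>) sequentially"
    using G(1) by (simp add: eventually_ball_finite)
  then have "eventually (\<lambda>k. dist (norm (y k)) 1 < \<eta> \<and> (\<forall>e\<in>G. dist (norm (e + y k)) 1 < \<eta>)) sequentially"
    by (intro eventually_conj tendstoD[OF l1 eta])
  then obtain N where N: "\<forall>k\<ge>N. dist (norm (y k)) 1 < \<eta> \<and> (\<forall>e\<in>G. dist (norm (e + y k)) 1 < \<eta>)"
    unfolding eventually_sequentially by blast
  have d: "\<And>a::real. dist a 1 < \<eta> \<Longrightarrow> 1 - \<eta> \<le> a \<and> a \<le> 1 + \<eta>"
    by (auto simp: dist_real_def)
  have "norm (y N) \<le> 1 \<and> 1 - \<eta> \<le> norm (y N) \<and> (\<forall>e\<in>G. 1 - \<eta> \<le> norm (e + y N) \<and> norm (e + y N) \<le> 1 + \<eta>)"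
    using N[rule_format, OF order_refl] y d by blast
  then show ?thesis by blast
qed

lemma asq_point:
  fixes x u y :: "'b::real_normed_vector"
  assumes x1: "norm x \<le> 1" and xu: "norm (x - u) \<le> \<delta>" and d0: "0 \<le> \<delta>"
    and y1: "norm y \<le> 1"
    and yu: "u \<noteq> 0 \<Longrightarrow> norm (sgn u + y) \<le> 1 + \<eta> \<and> 1 - \<eta> \<le> norm (sgn u + y) \<and> norm (- sgn u + y) \<le> 1 + \<eta>"
    and eta: "0 \<le> \<eta>"
  shows "norm (x + y) \<le> 1 + \<eta> + 2 * \<delta>"
    and "\<delta> < 1/3 \<Longrightarrow> 1 - \<delta> \<le> norm x \<Longrightarrow> 1 - \<eta> - 3 * \<delta> \<le> norm (x + y)"
proof -
  have tri: "norm (x + y) \<le> norm (u + y) + norm (x - u)"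
    using norm_triangle_ineq[of "u + y" "x - u"] by (simp add: algebra_simps)
  have "norm (u + y) \<le> 1 + \<eta> + \<delta>"
  proof (cases "u = 0")
    case True
    then show ?thesis using y1 eta d0 by simp
  next
    case False
    define a where "a = norm u"
    define e where "e = sgn u"
    have ue: "u = a *\<^sub>R e" by (simp add: a_def e_def norm_sgn_eq)
    have a0: "a > 0" using False by (simp add: a_def)
    have ax: "a \<le> 1 + \<delta>"
    proof -
      have "a \<le> norm x + norm (x - u)" unfolding a_def
        using norm_triangle_ineq[of x "u - x"] by (simp add: norm_minus_commute)
      then show ?thesis using x1 xu by linarith
    qed
    have e1: "norm (e + y) \<le> 1 + \<eta>" and e2: "norm (- e + y) \<le> 1 + \<eta>"
      using yu[OF False] by (auto simp: e_def)
    show ?thesis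
    proof (cases "a \<le> 1")
      case True
      define l where "l = (1 + a) / 2"
      have l0: "0 \<le> l" "l \<le> 1" using True a0 by (auto simp: l_def)
      have "u + y = l *\<^sub>R (e + y) + (1 - l) *\<^sub>R (- e + y)"
        unfolding ue l_def by (simp add: algebra_simps scaleR_add_left[symmetric] field_simps)
      then have "norm (u + y) \<le> l * norm (e + y) + (1 - l) * norm (- e + y)"
        using l0 norm_triangle_ineq[of "l *\<^sub>R (e + y)" "(1 - l) *\<^sub>R (- e + y)"] by simp
      also have "\<dots> \<le> l * (1 + \<eta>) + (1 - l) * (1 + \<eta>)"
        using l0 e1 e2 by (intro add_mono mult_left_mono) auto
      also have "\<dots> = 1 + \<eta>" by (simp add: algebra_simps)
      finally show ?thesis using d0 by simp
    next
      case False
      have eq2: "u + y = (e + y) + (a - 1) *\<^sub>R e" unfolding ue by (simp add: algebra_simps)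
      have "norm (u + y) \<le> norm (e + y) + norm ((a - 1) *\<^sub>R e)" unfolding eq2 by (rule norm_triangle_ineq)
      also have "norm ((a - 1) *\<^sub>R e) = a - 1" using False a0
        by (simp add: e_def norm_sgn \<open>u \<noteq> 0\<close>)
      finally show ?thesis using e1 ax by simp
    qed
  qed
  then show "norm (x + y) \<le> 1 + \<eta> + 2 * \<delta>" using tri xu by linarith
next
  assume d: "\<delta> < 1/3" and xl: "1 - \<delta> \<le> norm x"
  have au: "norm x - \<delta> \<le> norm u"
    using norm_triangle_ineq[of u "x - u"] xu by (simp add: algebra_simps)
  then have u: "u \<noteq> 0" using d xl by auto
  define a where "a = norm u"
  define e where "e = sgn u"
  have ue: "u = a *\<^sub>R e" by (simp add: a_def e_def norm_sgn_eq)
  have ax: "a \<le> 1 + \<delta>"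
  proof -
    have "a \<le> norm x + norm (x - u)" unfolding a_def
      using norm_triangle_ineq[of x "u - x"] by (simp add: norm_minus_commute)
    then show ?thesis using x1 xu by linarith
  qed
  have ab: "\<bar>a - 1\<bar> \<le> 2 * \<delta>" using ax au xl d0 unfolding a_def by auto
  have "norm (u - e) = \<bar>a - 1\<bar>"
  proof -
    have "u - e = (a - 1) *\<^sub>R e" unfolding ue by (simp add: algebra_simps)
    then show ?thesis by (simp add: e_def norm_sgn u)
  qed
  then have xe: "norm (x - e) \<le> 3 * \<delta>"
    using norm_triangle_ineq[of "x - u" "u - e"] xu ab by simp
  have "norm (e + y) \<le> norm (x + y) + norm (x - e)"
    using norm_triangle_ineq[of "x + y" "e - x"] by (simp add: algebra_simps norm_minus_commute)
  moreover have "1 - \<eta> \<le> norm (e + y)" using yu[OF u] by (simp add: e_def)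
  ultimately show "1 - \<eta> - 3 * \<delta> \<le> norm (x + y)" using xe by linarith
qed


lemma linf_ne:
  assumes "\<exists>C. AE t in M. norm (h t) \<le> C"
  shows "{C::real. 0 \<le> C \<and> (AE t in M. norm (h t) \<le> C)} \<noteq> {}"
proof -
  obtain C where C: "AE t in M. norm (h t) \<le> C" using assms by blast
  have "AE t in M. norm (h t) \<le> max 0 C" using C by eventually_elim simp
  then have "max 0 C \<in> {C::real. 0 \<le> C \<and> (AE t in M. norm (h t) \<le> C)}" by simp
  then show ?thesis by blast
qed

lemma linf_bdd: "bdd_below {C::real. 0 \<le> C \<and> (AE t in M. norm (h t) \<le> C)}"
  by (rule bdd_belowI[of _ 0]) auto

lemma linf_nonneg:
  assumes "\<exists>C. AE t in M. norm (h t) \<le> C"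
  shows "0 \<le> Linf_norm M h"
  unfolding Linf_norm_def by (rule cInf_greatest[OF linf_ne[OF assms]]) auto

lemma linf_le:
  assumes "0 \<le> C" "AE t in M. norm (h t) \<le> C"
  shows "Linf_norm M h \<le> C"
  unfolding Linf_norm_def by (rule cInf_lower[OF _ linf_bdd]) (use assms in auto)

lemma linf_ae:
  assumes b: "\<exists>C. AE t in M. norm (h t) \<le> C"
  shows "AE t in M. norm (h t) \<le> Linf_norm M h"
proof -
  let ?S = "{C::real. 0 \<le> C \<and> (AE t in M. norm (h t) \<le> C)}"
  have "AE t in M. norm (h t) \<le> Linf_norm M h + inverse (real (Suc n))" for n
  proof -
    have "Inf ?S < Linf_norm M h + inverse (real (Suc n))" unfolding Linf_norm_def by simp
    then obtain C where C: "C \<in> ?S" "C < Linf_norm M h + inverse (real (Suc n))"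
      using cInf_less_iff[OF linf_ne[OF b] linf_bdd] by blast
    then have "AE t in M. norm (h t) \<le> C" by simp
    then show ?thesis by (rule eventually_mono) (use C(2) in simp)
  qed
  then have "AE t in M. \<forall>n. norm (h t) \<le> Linf_norm M h + inverse (real (Suc n))"
    by (simp add: AE_all_countable)
  then show ?thesis
  proof eventually_elim
    case (elim t)
    show ?case
    proof (rule ccontr)
      assume "\<not> norm (h t) \<le> Linf_norm M h"
      then have "0 < norm (h t) - Linf_norm M h" by simp
      then obtain n where "inverse (real (Suc n)) < norm (h t) - Linf_norm M h"
        using reals_Archimedean by blast
      then show False using elim[rule_format, of n] by simp
    qed
  qed
qed

lemma linf_upper:
  assumes bf: "\<exists>C. AE t in M. norm (f t) \<le> C" and b: "0 \<le> b"
    and ae: "AE t in M. norm (h t) \<le> b * norm (f t)"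
  shows "(\<exists>C. AE t in M. norm (h t) \<le> C) \<and> Linf_norm M h \<le> b * Linf_norm M f"
proof -
  have "AE t in M. norm (h t) \<le> b * Linf_norm M f"
    using ae linf_ae[OF bf]
  proof eventually_elim
    case (elim t)
    then have "b * norm (f t) \<le> b * Linf_norm M f" using b by (intro mult_left_mono) auto
    then show ?case using elim by simp
  qed
  moreover have "0 \<le> b * Linf_norm M f" using b linf_nonneg[OF bf] by simp
  ultimately show ?thesis using linf_le by blast
qed

lemma linf_lower:
  assumes bf: "\<exists>C. AE t in M. norm (f t) \<le> C" and bh: "\<exists>C. AE t in M. norm (h t) \<le> C"
    and a: "0 \<le> a" and ae: "AE t in M. a * norm (f t) \<le> norm (h t)"
  shows "a * Linf_norm M f \<le> Linf_norm M h"
proof (cases "a = 0")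
  case True
  then show ?thesis using linf_nonneg[OF bh] by simp
next
  case False
  then have a0: "a > 0" using a by simp
  have "AE t in M. norm (f t) \<le> Linf_norm M h / a"
    using ae linf_ae[OF bh]
  proof eventually_elim
    case (elim t)
    then have "a * norm (f t) \<le> Linf_norm M h" by simp
    then show ?case using a0 by (simp add: pos_le_divide_eq mult.commute)
  qed
  moreover have "0 \<le> Linf_norm M h / a" using a0 linf_nonneg[OF bh] by simp
  ultimately have "Linf_norm M f \<le> Linf_norm M h / a" by (rule linf_le[rotated])
  then show ?thesis using a0 by (simp add: pos_le_divide_eq mult.commute)
qed

lemma linf_lower2:
  assumes bf: "\<exists>C. AE t in M. norm (f t) \<le> C" and bh: "\<exists>C. AE t in M. norm (h t) \<le> C"
    and f1: "Linf_norm M f = 1" and d: "0 < \<delta>"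
    and ae: "AE t in M. 1 - \<delta> < norm (f t) \<longrightarrow> c \<le> norm (h t)"
  shows "c \<le> Linf_norm M h"
proof (rule ccontr)
  assume "\<not> c \<le> Linf_norm M h"
  then have lt: "Linf_norm M h < c" by simp
  have "AE t in M. norm (f t) \<le> max 0 (1 - \<delta>)"
    using ae linf_ae[OF bh]
  proof eventually_elim
    case (elim t)
    then show ?case using lt by (cases "1 - \<delta> < norm (f t)") auto
  qed
  then have "Linf_norm M f \<le> max 0 (1 - \<delta>)" by (intro linf_le) auto
  then show False using f1 d by simp
qed

lemma lp_bound:
  fixes f h :: "'a \<Rightarrow> 'b::real_normed_vector"
  assumes p: "0 < p" and fi: "integrable M (\<lambda>t. norm (f t) powr p)"
    and hm: "h \<in> borel_measurable M" and a: "0 \<le> a" and ab: "a \<le> b"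
    and ae: "AE t in M. a * norm (f t) \<le> norm (h t) \<and> norm (h t) \<le> b * norm (f t)"
  shows "integrable M (\<lambda>t. norm (h t) powr p) \<and> a * Lp_norm M p f \<le> Lp_norm M p h \<and>
         Lp_norm M p h \<le> b * Lp_norm M p f"
proof -
  have b: "0 \<le> b" using a ab by simp
  have nm: "(\<lambda>t. norm (h t)) \<in> borel_measurable M"
    by (rule measurable_compose[OF hm borel_measurable_norm])
  have hpm: "(\<lambda>t. norm (h t) powr p) \<in> borel_measurable M"
    by (rule powr_real_measurable[OF nm measurable_const]) simp
  have up: "AE t in M. norm (h t) powr p \<le> b powr p * norm (f t) powr p"
    using ae
  proof eventually_elim
    case (elim t)
    then have "norm (h t) powr p \<le> (b * norm (f t)) powr p"
      using p by (intro powr_mono2) auto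
    then show ?case using b by (simp add: powr_mult)
  qed
  have lo: "AE t in M. a powr p * norm (f t) powr p \<le> norm (h t) powr p"
    using ae
  proof eventually_elim
    case (elim t)
    then have "(a * norm (f t)) powr p \<le> norm (h t) powr p"
      using p a by (intro powr_mono2) auto
    then show ?case using a by (simp add: powr_mult)
  qed
  have fb: "integrable M (\<lambda>t. b powr p * norm (f t) powr p)" using fi by simp
  have fa: "integrable M (\<lambda>t. a powr p * norm (f t) powr p)" using fi by simp
  have hi: "integrable M (\<lambda>t. norm (h t) powr p)"
  proof (rule Bochner_Integration.integrable_bound[OF fb hpm])
    show "AE t in M. norm (norm (h t) powr p) \<le> norm (b powr p * norm (f t) powr p)"
      using up by eventually_elim auto
  qed
  define I where "I = (\<integral>t. norm (f t) powr p \<partial>M)"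
  have I0: "0 \<le> I" unfolding I_def by (rule integral_nonneg_AE) auto
  have "(\<integral>t. norm (h t) powr p \<partial>M) \<le> (\<integral>t. b powr p * norm (f t) powr p \<partial>M)"
    by (rule integral_mono_AE[OF hi fb up])
  also have "\<dots> = b powr p * I" unfolding I_def by simp
  finally have u1: "(\<integral>t. norm (h t) powr p \<partial>M) \<le> b powr p * I" .
  have "a powr p * I = (\<integral>t. a powr p * norm (f t) powr p \<partial>M)" unfolding I_def by simp
  also have "\<dots> \<le> (\<integral>t. norm (h t) powr p \<partial>M)"
    by (rule integral_mono_AE[OF fa hi lo])
  finally have l1: "a powr p * I \<le> (\<integral>t. norm (h t) powr p \<partial>M)" .
  have J0: "0 \<le> (\<integral>t. norm (h t) powr p \<partial>M)" by (rule integral_nonneg_AE) auto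
  have "Lp_norm M p h \<le> (b powr p * I) powr (1 / p)"
    unfolding Lp_norm_def using u1 J0 p by (intro powr_mono2) auto
  also have "\<dots> = b * Lp_norm M p f"
    using b I0 p by (simp add: Lp_norm_def I_def[symmetric] powr_mult powr_powr)
  finally have U: "Lp_norm M p h \<le> b * Lp_norm M p f" .
  have "a * Lp_norm M p f = (a powr p * I) powr (1 / p)"
    using a I0 p by (simp add: Lp_norm_def I_def[symmetric] powr_mult powr_powr)
  also have "\<dots> \<le> Lp_norm M p h"
    unfolding Lp_norm_def using l1 I0 a p by (intro powr_mono2) auto
  finally show ?thesis using U hi by blast
qed

lemma E_bound:
  fixes x h :: "'a \<Rightarrow> 'b::real_normed_vector"
  assumes K: "kothe_space M E NE" and x: "(\<lambda>t. norm (x t)) \<in> E"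
    and hm: "h \<in> borel_measurable M" and a: "0 \<le> a" and ab: "a \<le> b"
    and ae: "AE t in M. a * norm (x t) \<le> norm (h t) \<and> norm (h t) \<le> b * norm (x t)"
  shows "(\<lambda>t. norm (h t)) \<in> E \<and> a * NE (\<lambda>t. norm (x t)) \<le> NE (\<lambda>t. norm (h t)) \<and>
         NE (\<lambda>t. norm (h t)) \<le> b * NE (\<lambda>t. norm (x t))"
proof -
  have b: "0 \<le> b" using a ab by simp
  have scal: "\<forall>f\<in>E. \<forall>c::real. (\<lambda>x. c * f x) \<in> E \<and> NE (\<lambda>x. c * f x) = \<bar>c\<bar> * NE f"
    using K unfolding kothe_space_def by (elim conjE) assumption
  have ideal: "\<forall>f\<in>E. \<forall>g\<in>borel_measurable M. (AE x in M. \<bar>g x\<bar> \<le> \<bar>f x\<bar>) \<longrightarrow> g \<in> E \<and> NE g \<le> NE f"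
    using K unfolding kothe_space_def by (elim conjE) assumption
  have Eb: "E \<subseteq> borel_measurable M"
    using K unfolding kothe_space_def by (elim conjE) assumption
  have nm: "(\<lambda>t. norm (h t)) \<in> borel_measurable M"
    by (rule measurable_compose[OF hm borel_measurable_norm])
  have bx: "(\<lambda>t. b * norm (x t)) \<in> E" and nbx: "NE (\<lambda>t. b * norm (x t)) = b * NE (\<lambda>t. norm (x t))"
    using scal[rule_format, OF x, of b] abs_of_nonneg[OF b] by metis+
  have "AE t in M. \<bar>norm (h t)\<bar> \<le> \<bar>b * norm (x t)\<bar>" using ae by eventually_elim (use b in auto)
  from ideal[rule_format, OF bx nm this]
  have hE: "(\<lambda>t. norm (h t)) \<in> E" and U: "NE (\<lambda>t. norm (h t)) \<le> NE (\<lambda>t. b * norm (x t))"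
    by auto
  have ax: "(\<lambda>t. a * norm (x t)) \<in> E" and nax: "NE (\<lambda>t. a * norm (x t)) = a * NE (\<lambda>t. norm (x t))"
    using scal[rule_format, OF x, of a] abs_of_nonneg[OF a] by metis+
  have "AE t in M. \<bar>a * norm (x t)\<bar> \<le> \<bar>norm (h t)\<bar>" using ae by eventually_elim (use a in auto)
  moreover have "(\<lambda>t. a * norm (x t)) \<in> borel_measurable M" using ax Eb by blast
  ultimately have L: "NE (\<lambda>t. a * norm (x t)) \<le> NE (\<lambda>t. norm (h t))"
    using ideal[rule_format, OF hE] by blast
  show ?thesis using hE U L nbx nax by simp
qed


lemma cont_meas:
  fixes f :: "'a \<Rightarrow> 'b::real_normed_vector"
  assumes fm: "f \<in> borel_measurable M" and c: "continuous_on UNIV (\<phi> :: 'b \<Rightarrow> real)"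
  shows "(\<lambda>t. \<phi> (f t)) \<in> borel_measurable M"
  by (rule measurable_compose[OF fm borel_measurable_continuous_onI[OF c]])

lemma core_lasq:
  fixes f :: "'a \<Rightarrow> 'b::real_normed_vector"
  assumes cm: "complete_measure M" and L: "LASQ TYPE('b)" and bf: "bochner_measurable M f"
    and e: "0 < \<epsilon>" "\<epsilon> \<le> 1"
  shows "\<exists>g. bochner_measurable M g \<and> (AE t in M. norm (g t) \<le> norm (f t) \<and>
            (1 - \<epsilon>) * norm (f t) \<le> norm (g t) \<and> norm (f t + g t) \<le> (1 + \<epsilon>) * norm (f t) \<and>
            norm (f t - g t) \<le> (1 + \<epsilon>) * norm (f t))"
proof -
  define \<eta> where "\<eta> = \<epsilon> / 2"
  define \<delta> where "\<delta> = \<epsilon> / 4"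
  have eta: "0 < \<eta>" and d0: "0 < \<delta>" and d1: "\<delta> < 1" using e by (auto simp: \<eta>_def \<delta>_def)
  obtain Y :: "'b \<Rightarrow> 'b" where Y: "\<forall>e. norm e = 1 \<longrightarrow> norm (Y e) \<le> 1 \<and> 1 - \<eta> \<le> norm (Y e) \<and>
            norm (e + Y e) \<le> 1 + \<eta> \<and> norm (e - Y e) \<le> 1 + \<eta>"
    using lasq_choice[OF L eta] by blast
  obtain s where s: "\<forall>n. simple_fun M (s n)" and ae: "AE x in M. (\<lambda>n. s n x) \<longlonglongrightarrow> f x"
    using bf unfolding bochner_measurable_def by blast
  have fm: "f \<in> borel_measurable M" by (rule bochner_borel[OF cm bf])
  have sfn: "simple_function M (s n)" for n using simple_fun_D[of M "s n"] s by blast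
  define P where "P n t = (norm (f t - s n t) \<le> \<delta> * norm (f t))" for n t
  have Ps: "{t\<in>space M. P n t} \<in> sets M" for n
  proof -
    have "(\<lambda>t. norm (f t - s n t) - \<delta> * norm (f t)) \<in> borel_measurable M"
    proof (rule simple_param_meas[OF sfn, where G="\<lambda>t v. norm (f t - v) - \<delta> * norm (f t)"])
      fix v
      show "(\<lambda>t. norm (f t - v) - \<delta> * norm (f t)) \<in> borel_measurable M"
        by (rule cont_meas[OF fm, where \<phi>="\<lambda>z. norm (z - v) - \<delta> * norm z"]) (intro continuous_intros)
    qed
    then have "{t\<in>space M. norm (f t - s n t) - \<delta> * norm (f t) \<le> 0} \<in> sets M" by (rule le0_set_meas)
    moreover have "{t\<in>space M. norm (f t - s n t) - \<delta> * norm (f t) \<le> 0} = {t\<in>space M. P n t}"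
      by (auto simp: P_def)
    ultimately show ?thesis by simp
  qed
  have rho: "bochner_measurable M (\<lambda>t. norm (f t))"
    by (rule bochner_comb[OF bf bf, where \<phi>="\<lambda>a b. norm a"]) (auto intro: tendsto_norm)
  define g where "g t = (if \<exists>n. P n t then norm (f t) *\<^sub>R Y (sgn (s (LEAST n. P n t) t)) else 0)" for t
  have bg: "bochner_measurable M g"
    unfolding g_def by (rule bochner_select[OF sfn Ps rho])
  have "AE t in M. norm (g t) \<le> norm (f t) \<and>
            (1 - \<epsilon>) * norm (f t) \<le> norm (g t) \<and> norm (f t + g t) \<le> (1 + \<epsilon>) * norm (f t) \<and>
            norm (f t - g t) \<le> (1 + \<epsilon>) * norm (f t)"
    using ae
  proof eventually_elim
    case (elim t)
    show ?case
    proof (cases "f t = 0")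
      case True
      then show ?thesis by (simp add: g_def)
    next
      case False
      then have pos: "0 < \<delta> * norm (f t)" using d0 by simp
      have "eventually (\<lambda>n. dist (s n t) (f t) < \<delta> * norm (f t)) sequentially"
        by (rule tendstoD[OF elim pos])
      then obtain N where N: "\<forall>n\<ge>N. dist (s n t) (f t) < \<delta> * norm (f t)"
        unfolding eventually_sequentially by blast
      have "P N t" using N[rule_format, OF order_refl]
        by (simp add: P_def dist_norm norm_minus_commute)
      then have ex: "\<exists>n. P n t" by blast
      define n0 where "n0 = (LEAST n. P n t)"
      have Pn0: "P n0 t" unfolding n0_def using ex by (rule LeastI_ex)
      define u where "u = s n0 t"
      have xu: "norm (f t - u) \<le> \<delta> * norm (f t)" using Pn0 by (simp add: P_def u_def)
      have u0: "u \<noteq> 0"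
      proof
        assume "u = 0"
        then have "norm (f t) \<le> \<delta> * norm (f t)" using xu by simp
        then show False using False d1 by (simp add: mult_le_cancel_right1)
      qed
      have su: "norm (sgn u) = 1" using u0 by (simp add: norm_sgn)
      have gt: "g t = norm (f t) *\<^sub>R Y (sgn u)" using ex by (simp add: g_def u_def n0_def)
      have Yp: "norm (Y (sgn u)) \<le> 1" "1 - \<eta> \<le> norm (Y (sgn u))"
        "norm (sgn u + Y (sgn u)) \<le> 1 + \<eta>" "norm (sgn u - Y (sgn u)) \<le> 1 + \<eta>"
        using Y su by blast+
      have B: "norm (norm (f t) *\<^sub>R Y (sgn u)) \<le> norm (f t) \<and> (1 - \<eta>) * norm (f t) \<le> norm (norm (f t) *\<^sub>R Y (sgn u)) \<and>
         norm (f t + norm (f t) *\<^sub>R Y (sgn u)) \<le> (1 + \<eta> + 2 * \<delta>) * norm (f t) \<and>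
         norm (f t - norm (f t) *\<^sub>R Y (sgn u)) \<le> (1 + \<eta> + 2 * \<delta>) * norm (f t)"
        by (rule lasq_point[OF False xu d1 Yp])
      have c1: "1 + \<eta> + 2 * \<delta> = 1 + \<epsilon>" by (simp add: \<eta>_def \<delta>_def)
      have "(1 - \<epsilon>) * norm (f t) \<le> (1 - \<eta>) * norm (f t)"
        using e by (intro mult_right_mono) (auto simp: \<eta>_def)
      then show ?thesis using B unfolding gt c1 by linarith
    qed
  qed
  then show ?thesis using bg by blast
qed


lemma sf_restrict:
  assumes "finite F" "\<forall>j\<in>F. simple_function M (u j)"
  shows "simple_function M (\<lambda>t. restrict (\<lambda>j. u j t) F)"
  using assms
proof (induction F rule: finite_induct)
  case empty
  then show ?case by simp
next
  case (insert a F)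
  have eq: "(\<lambda>t. restrict (\<lambda>j. u j t) (insert a F)) = (\<lambda>t. (restrict (\<lambda>j. u j t) F)(a := u a t))"
    by (rule ext) (auto simp: restrict_def)
  have "simple_function M (\<lambda>t. restrict (\<lambda>j. u j t) F)" using insert by blast
  moreover have "simple_function M (u a)" using insert by blast
  ultimately have "simple_function M (\<lambda>t. (restrict (\<lambda>j. u j t) F)(a := u a t))"
    by (rule simple_function_compose2[where h="\<lambda>r v. r(a := v)"])
  then show ?case unfolding eq .
qed

lemma core_asq:
  fixes F :: "('a \<Rightarrow> 'b::real_normed_vector) set" and e0 :: 'b
  assumes cm: "complete_measure M" and sfm: "sigma_finite_measure M" and A: "ASQ TYPE('b)"
    and F: "finite F" "F \<noteq> {}" and bF: "\<forall>j\<in>F. bochner_measurable M j"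
    and e0: "norm e0 = (1::real)" and eta: "0 < \<eta>" and d0: "0 < \<delta>"
  shows "\<exists>g. bochner_measurable M g \<and> (AE t in M. norm (g t) \<le> 1 \<and> 1 - \<eta> \<le> norm (g t) \<and>
     (\<forall>j\<in>F. norm (j t) \<le> 1 \<longrightarrow> norm (j t + g t) \<le> 1 + \<eta> + 2 * \<delta> \<and>
        (\<delta> < 1/3 \<longrightarrow> 1 - \<delta> \<le> norm (j t) \<longrightarrow> 1 - \<eta> - 3 * \<delta> \<le> norm (j t + g t))))"
proof -
  have "\<forall>j\<in>F. \<exists>s. (\<forall>n. simple_fun M (s n)) \<and> (AE t in M. (\<lambda>n. s n t) \<longlonglongrightarrow> j t)"
    using bF unfolding bochner_measurable_def by blast
  then obtain S where S: "\<forall>j\<in>F. (\<forall>n. simple_fun M (S j n)) \<and> (AE t in M. (\<lambda>n. S j n t) \<longlonglongrightarrow> j t)"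
    by (rule bchoice[elim_format]) blast
  have Ssf: "simple_function M (S j n)" if "j \<in> F" for j n
    using simple_fun_D[of M "S j n"] S that by blast
  define Q where "Q n t = restrict (\<lambda>j. S j n t) F" for n t
  have Qs: "simple_function M (Q n)" for n
    unfolding Q_def by (rule sf_restrict[OF F(1)]) (use Ssf in blast)
  define P where "P n t = (\<forall>j\<in>F. norm (j t - S j n t) \<le> \<delta>)" for n t
  have Ps: "{t\<in>space M. P n t} \<in> sets M" for n
  proof -
    have "{t\<in>space M. norm (j t - S j n t) - \<delta> \<le> 0} \<in> sets M" if j: "j \<in> F" for j
    proof (rule le0_set_meas)
      have jm: "j \<in> borel_measurable M" using bochner_borel[OF cm] bF j by blast
      show "(\<lambda>t. norm (j t - S j n t) - \<delta>) \<in> borel_measurable M"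
      proof (rule simple_param_meas[OF Ssf[OF j], where G="\<lambda>t v. norm (j t - v) - \<delta>"])
        fix v
        show "(\<lambda>t. norm (j t - v) - \<delta>) \<in> borel_measurable M"
          by (rule cont_meas[OF jm, where \<phi>="\<lambda>z. norm (z - v) - \<delta>"]) (intro continuous_intros)
      qed
    qed
    then have "(\<Inter>j\<in>F. {t\<in>space M. norm (j t - S j n t) - \<delta> \<le> 0}) \<in> sets M"
      using F by (intro sets.finite_INT) auto
    moreover have "(\<Inter>j\<in>F. {t\<in>space M. norm (j t - S j n t) - \<delta> \<le> 0}) = {t\<in>space M. P n t}"
      using F(2) by (auto simp: P_def)
    ultimately show ?thesis by simp
  qed
  define G where "G v = (\<lambda>j. sgn (v j)) ` {j\<in>F. v j \<noteq> 0} \<union> (\<lambda>j. - sgn (v j)) ` {j\<in>F. v j \<noteq> 0} \<union> {e0}"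
    for v :: "('a \<Rightarrow> 'b) \<Rightarrow> 'b"
  define cond where "cond v y = (norm y \<le> 1 \<and> 1 - \<eta> \<le> norm y \<and> (\<forall>e\<in>G v. 1 - \<eta> \<le> norm (e + y) \<and> norm (e + y) \<le> 1 + \<eta>))"
    for v y
  have condex: "\<exists>y. cond v y" for v
  proof -
    have "finite (G v)" using F(1) by (simp add: G_def)
    moreover have "G v \<noteq> {}" by (simp add: G_def)
    moreover have "\<forall>e\<in>G v. norm e = 1" using e0 by (auto simp: G_def norm_sgn)
    ultimately show ?thesis unfolding cond_def using asq_choice[OF A eta] by blast
  qed
  define W where "W v = (SOME y. cond v y)" for v
  have Wc: "cond v (W v)" for v unfolding W_def using condex by (rule someI_ex)
  define g where "g t = (if \<exists>n. P n t then (1::real) *\<^sub>R W (Q (LEAST n. P n t) t) else 0)" for t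
  have bg: "bochner_measurable M g"
    unfolding g_def by (rule bochner_select[OF Qs Ps bochner_one[OF sfm]])
  have aeS: "AE t in M. \<forall>j\<in>F. (\<lambda>n. S j n t) \<longlonglongrightarrow> j t"
    using F(1) S by (intro eventually_ball_finite) auto
  have "AE t in M. norm (g t) \<le> 1 \<and> 1 - \<eta> \<le> norm (g t) \<and>
     (\<forall>j\<in>F. norm (j t) \<le> 1 \<longrightarrow> norm (j t + g t) \<le> 1 + \<eta> + 2 * \<delta> \<and>
        (\<delta> < 1/3 \<longrightarrow> 1 - \<delta> \<le> norm (j t) \<longrightarrow> 1 - \<eta> - 3 * \<delta> \<le> norm (j t + g t)))"
    using aeS
  proof eventually_elim
    case (elim t)
    have "\<forall>j\<in>F. eventually (\<lambda>n. norm (j t - S j n t) \<le> \<delta>) sequentially"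
    proof
      fix j assume "j \<in> F"
      then have "eventually (\<lambda>n. dist (S j n t) (j t) < \<delta>) sequentially"
        using elim tendstoD d0 by blast
      then show "eventually (\<lambda>n. norm (j t - S j n t) \<le> \<delta>) sequentially"
        by (rule eventually_mono) (simp add: dist_norm norm_minus_commute)
    qed
    then have "eventually (\<lambda>n. \<forall>j\<in>F. norm (j t - S j n t) \<le> \<delta>) sequentially"
      using F(1) by (rule eventually_ball_finite[rotated])
    then obtain N where N: "\<forall>n\<ge>N. \<forall>j\<in>F. norm (j t - S j n t) \<le> \<delta>"
      unfolding eventually_sequentially by blast
    then have ex: "\<exists>n. P n t" unfolding P_def by blast
    define n0 where "n0 = (LEAST n. P n t)"
    have Pn0: "P n0 t" unfolding n0_def using ex by (rule LeastI_ex)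
    define v where "v = Q n0 t"
    have gt: "g t = W v" using ex by (simp add: g_def v_def n0_def)
    have cv: "cond v (W v)" by (rule Wc)
    show ?case
    proof (intro conjI ballI impI)
      show "norm (g t) \<le> 1" "1 - \<eta> \<le> norm (g t)" using cv unfolding gt cond_def by auto
    next
      fix j assume j: "j \<in> F" and j1: "norm (j t) \<le> 1"
      have vj: "v j = S j n0 t" using j by (simp add: v_def Q_def)
      have xu: "norm (j t - v j) \<le> \<delta>" using Pn0 j by (simp add: P_def vj)
      have yu: "norm (sgn (v j) + W v) \<le> 1 + \<eta> \<and> 1 - \<eta> \<le> norm (sgn (v j) + W v) \<and> norm (- sgn (v j) + W v) \<le> 1 + \<eta>"
        if "v j \<noteq> 0"
      proof -
        have "sgn (v j) \<in> G v" "- sgn (v j) \<in> G v" using j that by (auto simp: G_def)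
        then show ?thesis using cv unfolding cond_def by blast
      qed
      have W1: "norm (W v) \<le> 1" using cv unfolding cond_def by blast
      note ap = asq_point[OF j1 xu less_imp_le[OF d0] W1 yu less_imp_le[OF eta]]
      show "norm (j t + g t) \<le> 1 + \<eta> + 2 * \<delta>" using ap(1) unfolding gt .
      show "1 - \<eta> - 3 * \<delta> \<le> norm (j t + g t)" if "\<delta> < 1/3" "1 - \<delta> \<le> norm (j t)"
        using ap(2) that unfolding gt by blast
    qed
  qed
  then show ?thesis using bg by blast
qed


lemma sandwich1:
  assumes "\<forall>k. 1 - inverse (real (Suc k)) \<le> u k \<and> u k \<le> 1 + inverse (real (Suc k))"
  shows "u \<longlonglongrightarrow> (1::real)"
proof (rule tendsto_sandwich[where f="\<lambda>k. 1 - inverse (real (Suc k))" and h="\<lambda>k. 1 + inverse (real (Suc k))"])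
  show "eventually (\<lambda>k. 1 - inverse (real (Suc k)) \<le> u k) sequentially" using assms by simp
  show "eventually (\<lambda>k. u k \<le> 1 + inverse (real (Suc k))) sequentially" using assms by simp
  show "(\<lambda>k. 1 - inverse (real (Suc k))) \<longlonglongrightarrow> 1"
    using tendsto_diff[OF tendsto_const LIMSEQ_inverse_real_of_nat, of 1] by simp
  show "(\<lambda>k. 1 + inverse (real (Suc k))) \<longlonglongrightarrow> 1"
    using tendsto_add[OF tendsto_const LIMSEQ_inverse_real_of_nat, of 1] by simp
qed

lemma plus_fun_eq: "(x + y) = (\<lambda>t. x t + y t)" by (simp add: fun_eq_iff)
lemma minus_fun_eq: "(x - y) = (\<lambda>t. x t - y t)" by (simp add: fun_eq_iff)

lemma lasq_generic:
  fixes V :: "('a \<Rightarrow> 'b::real_normed_vector) set" and N :: "('a \<Rightarrow> 'b) \<Rightarrow> real"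
  assumes cm: "complete_measure M" and L: "LASQ TYPE('b)"
    and Vb: "\<And>x. x \<in> V \<Longrightarrow> bochner_measurable M x"
    and ii: "\<And>x h a b. x \<in> V \<Longrightarrow> bochner_measurable M h \<Longrightarrow> 0 \<le> a \<Longrightarrow> a \<le> b \<Longrightarrow>
       (AE t in M. a * norm (x t) \<le> norm (h t) \<and> norm (h t) \<le> b * norm (x t)) \<Longrightarrow>
       h \<in> V \<and> a * N x \<le> N h \<and> N h \<le> b * N x"
  shows "lasq_on V N"
  unfolding lasq_on_def
proof (intro ballI impI)
  fix x assume xV: "x \<in> V" and x1: "N x = 1"
  have bx: "bochner_measurable M x" by (rule Vb[OF xV])
  define \<epsilon> where "\<epsilon> k = inverse (real (Suc k))" for k
  have e: "0 < \<epsilon> k" "\<epsilon> k \<le> 1" for k by (auto simp: \<epsilon>_def inverse_le_1_iff)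
  have "\<forall>k. \<exists>g. bochner_measurable M g \<and> (AE t in M. norm (g t) \<le> norm (x t) \<and>
            (1 - \<epsilon> k) * norm (x t) \<le> norm (g t) \<and> norm (x t + g t) \<le> (1 + \<epsilon> k) * norm (x t) \<and>
            norm (x t - g t) \<le> (1 + \<epsilon> k) * norm (x t))"
    using core_lasq[OF cm L bx e] by blast
  from choice[OF this] obtain y where yy: "\<forall>k. bochner_measurable M (y k) \<and> (AE t in M. norm (y k t) \<le> norm (x t) \<and>
            (1 - \<epsilon> k) * norm (x t) \<le> norm (y k t) \<and> norm (x t + y k t) \<le> (1 + \<epsilon> k) * norm (x t) \<and>
            norm (x t - y k t) \<le> (1 + \<epsilon> k) * norm (x t))"
    by blast
  have y: "\<And>k. bochner_measurable M (y k)" using yy by blast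
  have yae: "\<And>k. AE t in M. norm (y k t) \<le> norm (x t) \<and>
            (1 - \<epsilon> k) * norm (x t) \<le> norm (y k t) \<and> norm (x t + y k t) \<le> (1 + \<epsilon> k) * norm (x t) \<and>
            norm (x t - y k t) \<le> (1 + \<epsilon> k) * norm (x t)"
    using yy by blast
  have P1: "y k \<in> V \<and> (1 - \<epsilon> k) * N x \<le> N (y k) \<and> N (y k) \<le> 1 * N x" for k
  proof (rule ii[OF xV y])
    show "0 \<le> 1 - \<epsilon> k" "1 - \<epsilon> k \<le> 1" using e[of k] by auto
    show "AE t in M. (1 - \<epsilon> k) * norm (x t) \<le> norm (y k t) \<and> norm (y k t) \<le> 1 * norm (x t)"
      using yae[of k] by eventually_elim simp
  qed
  have tri: "2 * norm a \<le> norm (a + b) + norm (a - b)" for a b :: 'b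
  proof -
    have "(a + b) + (a - b) = 2 *\<^sub>R a" by (simp add: scaleR_2)
    then have "2 * norm a = norm ((a + b) + (a - b))" by simp
    also have "\<dots> \<le> norm (a + b) + norm (a - b)" by (rule norm_triangle_ineq)
    finally show ?thesis .
  qed
  have P2: "x + y k \<in> V \<and> (1 - \<epsilon> k) * N x \<le> N (x + y k) \<and> N (x + y k) \<le> (1 + \<epsilon> k) * N x" for k
    unfolding plus_fun_eq
  proof (rule ii[OF xV bochner_add[OF bx y]])
    show "0 \<le> 1 - \<epsilon> k" "1 - \<epsilon> k \<le> 1 + \<epsilon> k" using e[of k] by auto
    show "AE t in M. (1 - \<epsilon> k) * norm (x t) \<le> norm (x t + y k t) \<and> norm (x t + y k t) \<le> (1 + \<epsilon> k) * norm (x t)"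
      using yae[of k]
    proof eventually_elim
      case (elim t)
      then show ?case using tri[of "x t" "y k t"] by (simp add: algebra_simps)
    qed
  qed
  have P3: "x - y k \<in> V \<and> (1 - \<epsilon> k) * N x \<le> N (x - y k) \<and> N (x - y k) \<le> (1 + \<epsilon> k) * N x" for k
    unfolding minus_fun_eq
  proof (rule ii[OF xV bochner_diff[OF bx y]])
    show "0 \<le> 1 - \<epsilon> k" "1 - \<epsilon> k \<le> 1 + \<epsilon> k" using e[of k] by auto
    show "AE t in M. (1 - \<epsilon> k) * norm (x t) \<le> norm (x t - y k t) \<and> norm (x t - y k t) \<le> (1 + \<epsilon> k) * norm (x t)"
      using yae[of k]
    proof eventually_elim
      case (elim t)
      then show ?case using tri[of "x t" "y k t"] by (simp add: algebra_simps)
    qed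
  qed
  have "(\<forall>k. y k \<in> V \<and> N (y k) \<le> 1)" using P1 x1 by simp
  moreover have "(\<lambda>k. N (y k)) \<longlonglongrightarrow> 1"
  proof (rule sandwich1, rule allI)
    fix k
    have "1 - \<epsilon> k \<le> N (y k) \<and> N (y k) \<le> 1" using P1[of k] x1 by simp
    then show "1 - inverse (real (Suc k)) \<le> N (y k) \<and> N (y k) \<le> 1 + inverse (real (Suc k))"
      using e[of k] unfolding \<epsilon>_def by linarith
  qed
  moreover have "(\<lambda>k. N (x + y k)) \<longlonglongrightarrow> 1"
  proof (rule sandwich1, rule allI)
    fix k
    have "1 - \<epsilon> k \<le> N (x + y k) \<and> N (x + y k) \<le> 1 + \<epsilon> k" using P2[of k] x1 by simp
    then show "1 - inverse (real (Suc k)) \<le> N (x + y k) \<and> N (x + y k) \<le> 1 + inverse (real (Suc k))"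
      unfolding \<epsilon>_def by linarith
  qed
  moreover have "(\<lambda>k. N (x - y k)) \<longlonglongrightarrow> 1"
  proof (rule sandwich1, rule allI)
    fix k
    have "1 - \<epsilon> k \<le> N (x - y k) \<and> N (x - y k) \<le> 1 + \<epsilon> k" using P3[of k] x1 by simp
    then show "1 - inverse (real (Suc k)) \<le> N (x - y k) \<and> N (x - y k) \<le> 1 + inverse (real (Suc k))"
      unfolding \<epsilon>_def by linarith
  qed
  ultimately show "\<exists>y::nat \<Rightarrow> 'a \<Rightarrow> 'b. (\<forall>k. y k \<in> V \<and> N (y k) \<le> 1) \<and> (\<lambda>k. N (y k)) \<longlonglongrightarrow> 1 \<and>
            (\<lambda>k. N (x + y k)) \<longlonglongrightarrow> 1 \<and> (\<lambda>k. N (x - y k)) \<longlonglongrightarrow> 1"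
    by (intro exI[of _ y]) simp
qed


lemma part_asq:
  fixes M :: "'a measure"
  assumes cm: "complete_measure M" and sfm: "sigma_finite_measure M" and A: "ASQ TYPE('b::real_normed_vector)"
  shows "asq_on (Linf_space M :: ('a \<Rightarrow> 'b) set) (Linf_norm M)"
  unfolding asq_on_def
proof (intro allI impI)
  fix F :: "('a \<Rightarrow> 'b) set"
  assume H: "finite F \<and> F \<noteq> {} \<and> F \<subseteq> Linf_space M \<and> (\<forall>x\<in>F. Linf_norm M x = 1)"
  then have F: "finite F" "F \<noteq> {}" and FL: "F \<subseteq> Linf_space M" and F1: "\<forall>x\<in>F. Linf_norm M x = 1"
    by auto
  have bF: "\<forall>j\<in>F. bochner_measurable M j" using FL by (auto simp: Linf_space_def)
  have bd: "\<exists>C. AE t in M. norm (j t) \<le> C" if "j \<in> F" for j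
    using FL that by (auto simp: Linf_space_def)
  have ae1: "AE t in M. norm (j t) \<le> 1" if j: "j \<in> F" for j
    using linf_ae[OF bd[OF j]] F1 j by simp
  obtain j0 where j0: "j0 \<in> F" using F(2) by blast
  have "\<exists>e0::'b. norm e0 = 1"
  proof (rule ccontr)
    assume "\<not> (\<exists>e0::'b. norm e0 = 1)"
    then have z: "\<forall>v::'b. v = 0"
    proof -
      assume nn: "\<not> (\<exists>e0::'b. norm e0 = 1)"
      show ?thesis
      proof
        fix v :: 'b
        show "v = 0"
        proof (rule ccontr)
          assume "v \<noteq> 0"
          then have "norm (sgn v) = 1" by (simp add: norm_sgn)
          then show False using nn by blast
        qed
      qed
    qed
    have "AE t in M. norm (j0 t) \<le> 0" by (rule AE_I2) (metis z norm_zero order_refl)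
    then have "Linf_norm M j0 \<le> 0" by (intro linf_le) auto
    then show False using F1 j0 by simp
  qed
  then obtain e0 :: 'b where e0: "norm e0 = 1" by blast
  define \<epsilon> where "\<epsilon> k = inverse (real (Suc k))" for k
  have e: "0 < \<epsilon> k" "\<epsilon> k \<le> 1" for k by (auto simp: \<epsilon>_def inverse_le_1_iff)
  have "\<forall>k. \<exists>g. bochner_measurable M g \<and> (AE t in M. norm (g t) \<le> 1 \<and> 1 - \<epsilon> k / 4 \<le> norm (g t) \<and>
     (\<forall>j\<in>F. norm (j t) \<le> 1 \<longrightarrow> norm (j t + g t) \<le> 1 + \<epsilon> k / 4 + 2 * (\<epsilon> k / 4) \<and>
        (\<epsilon> k / 4 < 1/3 \<longrightarrow> 1 - \<epsilon> k / 4 \<le> norm (j t) \<longrightarrow> 1 - \<epsilon> k / 4 - 3 * (\<epsilon> k / 4) \<le> norm (j t + g t))))"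
  proof
    fix k
    have p: "0 < \<epsilon> k / 4" using e[of k] by simp
    show "\<exists>g. bochner_measurable M g \<and> (AE t in M. norm (g t) \<le> 1 \<and> 1 - \<epsilon> k / 4 \<le> norm (g t) \<and>
     (\<forall>j\<in>F. norm (j t) \<le> 1 \<longrightarrow> norm (j t + g t) \<le> 1 + \<epsilon> k / 4 + 2 * (\<epsilon> k / 4) \<and>
        (\<epsilon> k / 4 < 1/3 \<longrightarrow> 1 - \<epsilon> k / 4 \<le> norm (j t) \<longrightarrow> 1 - \<epsilon> k / 4 - 3 * (\<epsilon> k / 4) \<le> norm (j t + g t))))"
      by (rule core_asq[OF cm sfm A F bF e0 p p])
  qed
  from choice[OF this] obtain y where yy: "\<forall>k. bochner_measurable M (y k) \<and> (AE t in M. norm (y k t) \<le> 1 \<and> 1 - \<epsilon> k / 4 \<le> norm (y k t) \<and>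
     (\<forall>j\<in>F. norm (j t) \<le> 1 \<longrightarrow> norm (j t + y k t) \<le> 1 + \<epsilon> k / 4 + 2 * (\<epsilon> k / 4) \<and>
        (\<epsilon> k / 4 < 1/3 \<longrightarrow> 1 - \<epsilon> k / 4 \<le> norm (j t) \<longrightarrow> 1 - \<epsilon> k / 4 - 3 * (\<epsilon> k / 4) \<le> norm (j t + y k t))))"
    by blast
  have yb: "bochner_measurable M (y k)" for k using yy by blast
  have yae: "AE t in M. norm (y k t) \<le> 1 \<and> 1 - \<epsilon> k / 4 \<le> norm (y k t) \<and>
     (\<forall>j\<in>F. norm (j t) \<le> 1 \<longrightarrow> norm (j t + y k t) \<le> 1 + \<epsilon> k / 4 + 2 * (\<epsilon> k / 4) \<and>
        (\<epsilon> k / 4 < 1/3 \<longrightarrow> 1 - \<epsilon> k / 4 \<le> norm (j t) \<longrightarrow> 1 - \<epsilon> k / 4 - 3 * (\<epsilon> k / 4) \<le> norm (j t + y k t)))" for k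
    using yy by blast
  have ybd: "AE t in M. norm (y k t) \<le> 1" for k using yae[of k] by eventually_elim simp
  have ybd': "\<exists>C. AE t in M. norm (y k t) \<le> C" for k using ybd by blast
  have yL: "y k \<in> Linf_space M" for k using yb ybd' by (simp add: Linf_space_def)
  have yN1: "Linf_norm M (y k) \<le> 1" for k by (rule linf_le[OF _ ybd]) simp
  have yN2: "1 - \<epsilon> k \<le> Linf_norm M (y k)" for k
  proof -
    have "1 - \<epsilon> k / 4 \<le> Linf_norm M (y k)"
    proof (rule linf_lower2[OF bd[OF j0] ybd'])
      show "Linf_norm M j0 = 1" using F1 j0 by blast
      show "(0::real) < 1" by simp
      show "AE t in M. 1 - 1 < norm (j0 t) \<longrightarrow> 1 - \<epsilon> k / 4 \<le> norm (y k t)"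
        using yae[of k] by eventually_elim blast
    qed
    then show ?thesis using e[of k] by linarith
  qed
  have jN: "(\<lambda>t. j t + y k t) \<in> Linf_space M \<and> 1 - \<epsilon> k \<le> Linf_norm M (\<lambda>t. j t + y k t) \<and>
        Linf_norm M (\<lambda>t. j t + y k t) \<le> 1 + \<epsilon> k" if j: "j \<in> F" for j k
  proof -
    have b: "bochner_measurable M (\<lambda>t. j t + y k t)" using bochner_add bF j yb by blast
    have d13: "\<epsilon> k / 4 < 1/3" using e[of k] by simp
    have ae2: "AE t in M. norm (j t + y k t) \<le> 1 + \<epsilon> k / 4 + 2 * (\<epsilon> k / 4) \<and>
        (1 - \<epsilon> k / 4 < norm (j t) \<longrightarrow> 1 - \<epsilon> k / 4 - 3 * (\<epsilon> k / 4) \<le> norm (j t + y k t))"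
      using yae[of k] ae1[OF j]
    proof eventually_elim
      case (elim t)
      have "norm (j t + y k t) \<le> 1 + \<epsilon> k / 4 + 2 * (\<epsilon> k / 4) \<and>
        (\<epsilon> k / 4 < 1/3 \<longrightarrow> 1 - \<epsilon> k / 4 \<le> norm (j t) \<longrightarrow> 1 - \<epsilon> k / 4 - 3 * (\<epsilon> k / 4) \<le> norm (j t + y k t))"
        using elim j by blast
      then show ?case using d13 by auto
    qed
    have up: "AE t in M. norm (j t + y k t) \<le> 1 + \<epsilon> k / 4 + 2 * (\<epsilon> k / 4)"
      using ae2 by eventually_elim blast
    then have bd2: "\<exists>C. AE t in M. norm (j t + y k t) \<le> C" by blast
    have U: "Linf_norm M (\<lambda>t. j t + y k t) \<le> 1 + \<epsilon> k / 4 + 2 * (\<epsilon> k / 4)"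
      by (rule linf_le[OF _ up]) (use e[of k] in simp)
    have Lo: "1 - \<epsilon> k / 4 - 3 * (\<epsilon> k / 4) \<le> Linf_norm M (\<lambda>t. j t + y k t)"
    proof (rule linf_lower2[OF bd[OF j] bd2])
      show "Linf_norm M j = 1" using F1 j by blast
      show "0 < \<epsilon> k / 4" using e[of k] by simp
      show "AE t in M. 1 - \<epsilon> k / 4 < norm (j t) \<longrightarrow> 1 - \<epsilon> k / 4 - 3 * (\<epsilon> k / 4) \<le> norm (j t + y k t)"
        using ae2 by eventually_elim blast
    qed
    have I: "(\<lambda>t. j t + y k t) \<in> Linf_space M" using b bd2 by (simp add: Linf_space_def)
    have c1: "1 + \<epsilon> k / 4 + 2 * (\<epsilon> k / 4) \<le> 1 + \<epsilon> k" using e[of k] by linarith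
    have c2: "1 - \<epsilon> k / 4 - 3 * (\<epsilon> k / 4) = 1 - \<epsilon> k" by linarith
    show ?thesis using I U Lo c1 c2 by linarith
  qed
  have "\<forall>k. y k \<in> Linf_space M \<and> Linf_norm M (y k) \<le> 1" using yL yN1 by blast
  moreover have "(\<lambda>k. Linf_norm M (y k)) \<longlonglongrightarrow> 1"
  proof (rule sandwich1, rule allI)
    fix k
    show "1 - inverse (real (Suc k)) \<le> Linf_norm M (y k) \<and> Linf_norm M (y k) \<le> 1 + inverse (real (Suc k))"
      using yN1[of k] yN2[of k] e[of k] unfolding \<epsilon>_def by linarith
  qed
  moreover have "\<forall>x\<in>F. (\<lambda>k. Linf_norm M (x + y k)) \<longlonglongrightarrow> 1"
  proof
    fix x assume x: "x \<in> F"
    show "(\<lambda>k. Linf_norm M (x + y k)) \<longlonglongrightarrow> 1"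
    proof (rule sandwich1, rule allI)
      fix k
      show "1 - inverse (real (Suc k)) \<le> Linf_norm M (x + y k) \<and> Linf_norm M (x + y k) \<le> 1 + inverse (real (Suc k))"
        using jN[OF x, of k] unfolding \<epsilon>_def plus_fun_eq by linarith
    qed
  qed
  ultimately show "\<exists>y::nat \<Rightarrow> 'a \<Rightarrow> 'b. (\<forall>k. y k \<in> Linf_space M \<and> Linf_norm M (y k) \<le> 1) \<and>
      (\<lambda>k. Linf_norm M (y k)) \<longlonglongrightarrow> 1 \<and> (\<forall>x\<in>F. (\<lambda>k. Linf_norm M (x + y k)) \<longlonglongrightarrow> 1)"
    by (intro exI[of _ y]) simp
qed


theorem theorem4p5:
  fixes M :: "'a measure"
  assumes "complete_measure M"
    and "sigma_finite_measure M"
  shows "(\<forall>(E::('a \<Rightarrow> real) set) NE.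
            kothe_space M E NE \<and> LASQ TYPE('b::banach) \<and> simple_dense M E NE TYPE('b)
            \<longrightarrow> lasq_on (EX_space M E :: ('a \<Rightarrow> 'b) set) (EX_norm NE))
       \<and> (\<forall>p::real. 1 \<le> p \<and> LASQ TYPE('b)
            \<longrightarrow> lasq_on (Lp_space M p :: ('a \<Rightarrow> 'b) set) (Lp_norm M p))
       \<and> (ASQ TYPE('b) \<longrightarrow> asq_on (Linf_space M :: ('a \<Rightarrow> 'b) set) (Linf_norm M))
       \<and> (LASQ TYPE('b) \<longrightarrow> lasq_on (Linf_space M :: ('a \<Rightarrow> 'b) set) (Linf_norm M))"
proof -
  have cm: "complete_measure M" and sfm: "sigma_finite_measure M" using assms by auto
  have P1: "\<forall>(E::('a \<Rightarrow> real) set) NE.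
            kothe_space M E NE \<and> LASQ TYPE('b::banach) \<and> simple_dense M E NE TYPE('b)
            \<longrightarrow> lasq_on (EX_space M E :: ('a \<Rightarrow> 'b) set) (EX_norm NE)"
  proof (intro allI impI)
    fix E :: "('a \<Rightarrow> real) set" and NE
    assume H: "kothe_space M E NE \<and> LASQ TYPE('b) \<and> simple_dense M E NE TYPE('b)"
    then have K: "kothe_space M E NE" and L: "LASQ TYPE('b)" by auto
    show "lasq_on (EX_space M E :: ('a \<Rightarrow> 'b) set) (EX_norm NE)"
    proof (rule lasq_generic[OF cm L])
      fix x :: "'a \<Rightarrow> 'b" assume "x \<in> EX_space M E"
      then show "bochner_measurable M x" by (simp add: EX_space_def)
    next
      fix x h :: "'a \<Rightarrow> 'b" and a b :: real
      assume x: "x \<in> EX_space M E" and bh: "bochner_measurable M h" and a: "0 \<le> a" and ab: "a \<le> b"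
        and ae: "AE t in M. a * norm (x t) \<le> norm (h t) \<and> norm (h t) \<le> b * norm (x t)"
      have xE: "(\<lambda>t. norm (x t)) \<in> E" using x by (simp add: EX_space_def)
      have hm: "h \<in> borel_measurable M" by (rule bochner_borel[OF cm bh])
      from E_bound[OF K xE hm a ab ae]
      show "h \<in> EX_space M E \<and> a * EX_norm NE x \<le> EX_norm NE h \<and> EX_norm NE h \<le> b * EX_norm NE x"
        using bh by (simp add: EX_space_def EX_norm_def)
    qed
  qed
  have P2: "\<forall>p::real. 1 \<le> p \<and> LASQ TYPE('b)
            \<longrightarrow> lasq_on (Lp_space M p :: ('a \<Rightarrow> 'b) set) (Lp_norm M p)"
  proof (intro allI impI)
    fix p :: real assume H: "1 \<le> p \<and> LASQ TYPE('b)"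
    then have p: "0 < p" and L: "LASQ TYPE('b)" by auto
    show "lasq_on (Lp_space M p :: ('a \<Rightarrow> 'b) set) (Lp_norm M p)"
    proof (rule lasq_generic[OF cm L])
      fix x :: "'a \<Rightarrow> 'b" assume "x \<in> Lp_space M p"
      then show "bochner_measurable M x" by (simp add: Lp_space_def)
    next
      fix x h :: "'a \<Rightarrow> 'b" and a b :: real
      assume x: "x \<in> Lp_space M p" and bh: "bochner_measurable M h" and a: "0 \<le> a" and ab: "a \<le> b"
        and ae: "AE t in M. a * norm (x t) \<le> norm (h t) \<and> norm (h t) \<le> b * norm (x t)"
      have xi: "integrable M (\<lambda>t. norm (x t) powr p)" using x by (simp add: Lp_space_def)
      have hm: "h \<in> borel_measurable M" by (rule bochner_borel[OF cm bh])
      from lp_bound[OF p xi hm a ab ae]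
      show "h \<in> Lp_space M p \<and> a * Lp_norm M p x \<le> Lp_norm M p h \<and> Lp_norm M p h \<le> b * Lp_norm M p x"
        using bh by (simp add: Lp_space_def)
    qed
  qed
  have P3: "ASQ TYPE('b) \<longrightarrow> asq_on (Linf_space M :: ('a \<Rightarrow> 'b) set) (Linf_norm M)"
    using part_asq[OF cm sfm] by blast
  have P4: "LASQ TYPE('b) \<longrightarrow> lasq_on (Linf_space M :: ('a \<Rightarrow> 'b) set) (Linf_norm M)"
  proof
    assume L: "LASQ TYPE('b)"
    show "lasq_on (Linf_space M :: ('a \<Rightarrow> 'b) set) (Linf_norm M)"
    proof (rule lasq_generic[OF cm L])
      fix x :: "'a \<Rightarrow> 'b" assume "x \<in> Linf_space M"
      then show "bochner_measurable M x" by (simp add: Linf_space_def)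
    next
      fix x h :: "'a \<Rightarrow> 'b" and a b :: real
      assume x: "x \<in> Linf_space M" and bh: "bochner_measurable M h" and a: "0 \<le> a" and ab: "a \<le> b"
        and ae: "AE t in M. a * norm (x t) \<le> norm (h t) \<and> norm (h t) \<le> b * norm (x t)"
      have bx: "\<exists>C. AE t in M. norm (x t) \<le> C" using x by (simp add: Linf_space_def)
      have b0: "0 \<le> b" using a ab by simp
      have aeU: "AE t in M. norm (h t) \<le> b * norm (x t)" using ae by eventually_elim blast
      have aeL: "AE t in M. a * norm (x t) \<le> norm (h t)" using ae by eventually_elim blast
      from linf_upper[OF bx b0 aeU]
      have bhh: "\<exists>C. AE t in M. norm (h t) \<le> C" and U: "Linf_norm M h \<le> b * Linf_norm M x" by auto
      have Lo: "a * Linf_norm M x \<le> Linf_norm M h" by (rule linf_lower[OF bx bhh a aeL])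
      have "h \<in> Linf_space M" using bh bhh by (simp add: Linf_space_def)
      then show "h \<in> Linf_space M \<and> a * Linf_norm M x \<le> Linf_norm M h \<and> Linf_norm M h \<le> b * Linf_norm M x"
        using U Lo by blast
    qed
  qed
  show ?thesis using P1 P2 P3 P4 by blast
qed

end
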